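(* Let $r\ge1$, $\mu\in\mathcal P_r$, $n\in\mathbb N$, and let $\mathbf x\in\Xi_n$, $\mathbf p\in\Pi_n$ be such that $d_r(\delta^{\mathbf p}_{\mathbf x},\mu)\le d_r(\delta^{\mathbf q}_{\mathbf y},\mu)$ for all $\mathbf y\in\Xi_n$, $\mathbf q\in\Pi_n$. Write $P_i=\sum_{j\le i}p_j$. Then for every $i$: (i) for $1\le i\le n-1$, $x_i<x_{i+1}$ implies $P_i\in[\mu(]-\infty,c_i[),\mu(]-\infty,c_i])]$ with $c_i=\frac12(x_i+x_{i+1})$; (ii) for $1\le i\le n$, $P_{i-1}<P_i$ implies $x_i\in Q^{F_\mu}_{(P_{i-1}+P_i)/2}$ if $r=1$, and $x_i=\tau_r^{f_i}$ with $f_i$ the restriction of $F_\mu^{-1}$ to $[P_{i-1},P_i]$ if $r>1$. Moreover, if ${\rm supp}\,\mu$ has at most $n$ points then $\delta^{\mathbf p}_{\mathbf x}=\mu$, whereas if ${\rm supp}\,\mu$ has more than $n$ points then $x_i<x_{i+1}$ for all $1\le i\le n-1$ and $P_{i-1}<P_i$ for all $1\le i\le n$.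
   Context: $\mathcal P$ denotes the set of Borel probability measures on $\mathbb R$; $\mathcal P_r=\{\mu\in\mathcal P:\int|x|^r{\rm d}\mu(x)<\infty\}$. For $\mu\in\mathcal P$, $F_\mu(x)=\mu(]-\infty,x])$ and $F_\mu^{-1}(t)=\sup\{x: F_\mu(x)\le t\}$, $t\in]0,1[$. $d_r(\mu,\nu)=\big(\int_0^1|F_\mu^{-1}(t)-F_\nu^{-1}(t)|^r{\rm d}t\big)^{1/r}$. $\Xi_n=\{\mathbf x\in\mathbb R^n:x_1\le\dots\le x_n\}$, $\Pi_n=\{\mathbf p\in\mathbb R^n:p_i\ge0,\sum_ip_i=1\}$, $\delta^{\mathbf p}_{\mathbf x}=\sum_ip_i\delta_{x_i}$, $P_0=0$. For $s\in]0,1[$, $Q^{F_\mu}_s=[\inf\{x:F_\mu(x)\ge s\},\sup\{x:F_\mu(x)\le s\}]$. For a bounded non-degenerate interval $J$ and $f\in L^r(J)$, $r>1$, $\tau_r^f$ is the unique real minimizer of $t\mapsto\|f-t\|_{L^r(J)}$. *)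

theory Defs
  imports "HOL-Probability.Probability"
begin

definition in_Pr :: "real \<Rightarrow> real measure \<Rightarrow> bool" where
  "in_Pr r M \<longleftrightarrow> real_distribution M \<and> integrable M (\<lambda>x. \<bar>x\<bar> powr r)"

definition quantile :: "real measure \<Rightarrow> real \<Rightarrow> real" where
  "quantile M t = Sup {x. cdf M x \<le> t}"

definition d_r :: "real \<Rightarrow> real measure \<Rightarrow> real measure \<Rightarrow> real" where
  "d_r r M N = (LINT t:{0<..<1}|lborel. \<bar>quantile M t - quantile N t\<bar> powr r) powr (1 / r)"

text \<open>Xi_n and Pi_n, vectors indexed by 1..n.\<close>
definition Xi :: "nat \<Rightarrow> (nat \<Rightarrow> real) \<Rightarrow> bool" where
  "Xi n x \<longleftrightarrow> (\<forall>i. 1 \<le> i \<and> i < n \<longrightarrow> x i \<le> x (Suc i))"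

definition Pi_n :: "nat \<Rightarrow> (nat \<Rightarrow> real) \<Rightarrow> bool" where
  "Pi_n n p \<longleftrightarrow> (\<forall>i\<in>{1..n}. 0 \<le> p i) \<and> (\<Sum>i=1..n. p i) = 1"

definition discr :: "nat \<Rightarrow> (nat \<Rightarrow> real) \<Rightarrow> (nat \<Rightarrow> real) \<Rightarrow> real measure" where
  "discr n x p = measure_of UNIV (sets borel)
     (\<lambda>A. \<Sum>i=1..n. ennreal (p i) * indicator A (x i))"

definition Psum :: "(nat \<Rightarrow> real) \<Rightarrow> nat \<Rightarrow> real" where
  "Psum p i = (\<Sum>j=1..i. p j)"

definition Qset :: "real measure \<Rightarrow> real \<Rightarrow> real set" where
  "Qset M s = {Inf {x. cdf M x \<ge> s} .. Sup {x. cdf M x \<le> s}}"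

definition Lr_norm_J :: "real \<Rightarrow> real \<Rightarrow> real \<Rightarrow> (real \<Rightarrow> real) \<Rightarrow> real" where
  "Lr_norm_J r a b f = (LINT u:{a..b}|lborel. \<bar>f u\<bar> powr r) powr (1 / r)"

definition tau :: "real \<Rightarrow> real \<Rightarrow> real \<Rightarrow> (real \<Rightarrow> real) \<Rightarrow> real" where
  "tau r a b f = (THE t. \<forall>s. Lr_norm_J r a b (\<lambda>u. f u - t) \<le> Lr_norm_J r a b (\<lambda>u. f u - s))"

definition supp :: "real measure \<Rightarrow> real set" where
  "supp M = {x. \<forall>e>0. emeasure M {x - e<..<x + e} > 0}"

end

theory Submission
  imports Defs
begin

section \<open>Quantile basics\<close>

lemma cdf_set_bdd:
  assumes N: "real_distribution N" and t: "t < 1"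
  shows "bdd_above {x. cdf N x \<le> t}"
proof -
  interpret real_distribution N by (rule N)
  obtain b where b: "t < cdf N b"
    using order_tendstoD(1)[OF cdf_lim_at_top_prob t] eventually_happens' trivial_limit_at_top_linorder
    by (metis eventually_at_top_linorder order_refl)
  show ?thesis
  proof (rule bdd_aboveI[of _ b])
    fix x assume "x \<in> {x. cdf N x \<le> t}"
    then show "x \<le> b" using b cdf_nondecreasing[of b x] by force
  qed
qed

lemma cdf_set_ne:
  assumes N: "real_distribution N" and t: "0 < t"
  shows "{x. cdf N x \<le> t} \<noteq> {}"
proof -
  interpret real_distribution N by (rule N)
  obtain a where "cdf N a < t"
    using order_tendstoD(2)[OF cdf_lim_at_bot t]
    by (metis eventually_at_bot_linorder order_refl)
  then show ?thesis by (auto intro!: exI[of _ a])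
qed

lemma q_ge:
  assumes N: "real_distribution N" and t: "t < 1" and "cdf N x \<le> t"
  shows "x \<le> quantile N t"
  unfolding quantile_def using assms cdf_set_bdd[OF N t] by (auto intro: cSup_upper)

lemma q_le:
  assumes N: "real_distribution N" and t: "0 < t" and "t < cdf N x"
  shows "quantile N t \<le> x"
  unfolding quantile_def
proof (rule cSup_least)
  show "{x. cdf N x \<le> t} \<noteq> {}" by (rule cdf_set_ne[OF N t])
  interpret real_distribution N by (rule N)
  fix z assume "z \<in> {x. cdf N x \<le> t}"
  then show "z \<le> x" using assms cdf_nondecreasing[of x z] by force
qed

lemma q_lt_imp:
  assumes N: "real_distribution N" and t: "0 < t" and "x < quantile N t"
  shows "cdf N x \<le> t"
  using q_le[OF N t, of x] assms by force

lemma q_gt_imp: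
  assumes N: "real_distribution N" and t: "t < 1" and "quantile N t < x"
  shows "t < cdf N x"
  using q_ge[OF N t, of x] assms by force

lemma q_mono:
  assumes N: "real_distribution N" and "0 < t" "t \<le> t'" "t' < 1"
  shows "quantile N t \<le> quantile N t'"
  unfolding quantile_def
  by (rule cSup_subset_mono) (use cdf_set_ne[OF N] cdf_set_bdd[OF N] assms in auto)

lemma q_mono_on: "real_distribution N \<Longrightarrow> mono_on {0<..<1} (quantile N)"
  by (auto intro!: mono_onI q_mono)

lemma q_gt_of_cdf_lt:
  assumes N: "real_distribution N" and t: "0 < t" "t < 1" and "cdf N z < t"
  shows "z < quantile N t"
proof -
  interpret real_distribution N by (rule N)
  have "\<forall>\<^sub>F x in at_right z. cdf N x < t"
    using cdf_is_right_cont[of z] assms(4) unfolding continuous_within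
    by (auto dest: order_tendstoD)
  then obtain x where "z < x" "cdf N x < t"
    by (metis eventually_at_right_field dense)
  then show ?thesis using q_ge[OF N t(2), of x] by linarith
qed

lemma q_lt_of_lt_left:
  assumes N: "real_distribution N" and t: "0 < t" "t < 1" and "t < measure N {..<c}"
  shows "quantile N t < c"
proof -
  interpret real_distribution N by (rule N)
  have "\<forall>\<^sub>F x in at_left c. t < cdf N x"
    using cdf_at_left[of c] assms(4) by (auto dest: order_tendstoD)
  then obtain x where "x < c" "t < cdf N x"
    by (metis eventually_at_left_field dense)
  then show ?thesis using q_le[OF N t(1), of x] by linarith
qed

definition Om :: "real measure" where "Om = restrict_space lborel {0<..<1::real}"

lemma space_Om[simp]: "space Om = {0<..<1}"
  by (simp add: Om_def space_restrict_space)

lemma sets_Om: "sets Om = sets (restrict_space borel {0<..<1::real})"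
  by (simp add: Om_def sets_restrict_space)

lemma prob_space_Om: "prob_space Om"
  by (auto simp add: Om_def emeasure_restrict_space space_restrict_space intro!: prob_spaceI)

lemma emeasure_Om: "A \<subseteq> {0<..<1} \<Longrightarrow> emeasure Om A = emeasure lborel A"
  unfolding Om_def by (subst emeasure_restrict_space) auto

lemma mono_meas_Om:
  fixes g :: "real \<Rightarrow> real"
  assumes "mono_on {0<..<1} g"
  shows "g \<in> borel_measurable Om"
proof -
  have "g \<in> borel_measurable (restrict_space borel {0<..<1})"
    by (rule borel_measurable_mono_on_fnc[OF assms])
  then show ?thesis
    by (subst measurable_cong_sets[OF sets_Om refl])
qed

lemma set_int_Om: "(LINT t:{0<..<1}|lborel. (g::real\<Rightarrow>real) t) = integral\<^sup>L Om g"
  unfolding Om_def set_lebesgue_integral_def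
  using integral_restrict_space[of "{0<..<1::real}" lborel g] by simp

lemma set_integrable_Om: "set_integrable lborel {0<..<1} (g::real\<Rightarrow>real) \<longleftrightarrow> integrable Om g"
  unfolding Om_def set_integrable_def
  using integrable_restrict_space[of "{0<..<1::real}" lborel g] by simp

lemma q_distr:
  assumes N: "real_distribution N"
  shows "distr Om borel (quantile N) = N"
proof (intro cdf_unique ext)
  interpret real_distribution N by (rule N)
  interpret O: prob_space Om by (rule prob_space_Om)
  have meas: "quantile N \<in> borel_measurable Om"
    by (rule mono_meas_Om[OF q_mono_on[OF N]])
  show "real_distribution (distr Om borel (quantile N))"
    using meas by auto
  show "real_distribution N" by (rule N)
  fix z
  let ?S = "{t\<in>{0<..<1}. quantile N t \<le> z}"
  have sub1: "{0<..<cdf N z} \<subseteq> ?S"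
  proof
    fix t assume t: "t \<in> {0<..<cdf N z}"
    then have "t < 1" using cdf_bounded_prob[of z] by auto
    then show "t \<in> ?S" using t q_le[OF N, of t z] by auto
  qed
  have sub2: "?S \<subseteq> {0<..<cdf N z} \<union> {cdf N z}"
  proof
    fix t assume t: "t \<in> ?S"
    have "\<not> cdf N z < t" using q_gt_of_cdf_lt[OF N, of t z] t by auto
    then show "t \<in> {0<..<cdf N z} \<union> {cdf N z}" using t by auto
  qed
  have S_eq: "?S = {0<..<cdf N z} \<union> (?S \<inter> {cdf N z})"
    using sub1 sub2 by blast
  have nul: "?S \<inter> {cdf N z} \<in> null_sets lborel"
    by (rule finite_imp_null_set_lborel) auto
  have Smeas: "?S \<in> sets lborel"
    by (subst S_eq) (use null_setsD2[OF nul] in auto)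
  have "cdf (distr Om borel (quantile N)) z = measure Om (quantile N -` {..z} \<inter> space Om)"
    using meas by (simp add: cdf_def measure_distr)
  also have "quantile N -` {..z} \<inter> space Om = ?S" by auto
  also have "measure Om ?S = measure lborel ?S"
    unfolding measure_def by (subst emeasure_Om) auto
  also have "\<dots> = measure lborel {0<..<cdf N z}"
  proof -
    from nul have "emeasure lborel ?S = emeasure lborel {0<..<cdf N z}"
      by (subst S_eq, subst emeasure_Un_null_set) auto
    then show ?thesis unfolding measure_def by simp
  qed
  also have "\<dots> = cdf N z" using cdf_nonneg[of z] by simp
  finally show "cdf (distr Om borel (quantile N)) z = cdf N z" .
qed

lemma q_in_supp:
  assumes N: "real_distribution N" and t: "0 < t" "t < 1"
  shows "quantile N t \<in> supp N"
proof -
  interpret real_distribution N by (rule N)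
  let ?s = "quantile N t"
  { fix e :: real assume e: "e > 0"
    have a: "cdf N (?s - e) \<le> t" using q_lt_imp[OF N t(1), of "?s - e"] e by auto
    have b: "t < cdf N (?s + e/2)" using q_gt_imp[OF N t(2), of "?s + e/2"] e by auto
    have "measure N {?s - e<..?s + e/2} = cdf N (?s + e/2) - cdf N (?s - e)"
      using cdf_diff_eq[of "?s - e" "?s + e/2"] e by simp
    also have "\<dots> > 0" using a b by simp
    finally have pos: "measure N {?s - e<..?s + e/2} > 0" .
    have "measure N {?s - e<..?s + e/2} \<le> measure N {?s - e<..<?s + e}"
      using e by (intro finite_measure_mono) auto
    with pos have "measure N {?s - e<..<?s + e} > 0" by simp
    then have "emeasure N {?s - e<..<?s + e} > 0"
      by (simp add: emeasure_eq_measure) }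
  then show ?thesis unfolding supp_def by auto
qed

section \<open>Discrete measures\<close>

lemma Xi_mono:
  assumes "Xi n y" "1 \<le> i" "i \<le> j" "j \<le> n"
  shows "y i \<le> y j"
  using assms(3,4)
proof (induction j)
  case 0 then show ?case by simp
next
  case (Suc j)
  show ?case
  proof (cases "i = Suc j")
    case True then show ?thesis by simp
  next
    case False
    then have "i \<le> j" using Suc by simp
    then have "y i \<le> y j" using Suc by simp
    also have "y j \<le> y (Suc j)" using assms(1,2) Suc \<open>i \<le> j\<close> unfolding Xi_def by simp
    finally show ?thesis .
  qed
qed

lemma emeasure_discr:
  assumes "A \<in> sets borel"
  shows "emeasure (discr n y q) A = (\<Sum>i=1..n. ennreal (q i) * indicator A (y i))"
  unfolding discr_def
proof (rule emeasure_measure_of_sigma)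
  show "sigma_algebra UNIV (sets borel)"
    using sets.sigma_algebra_axioms[of borel] by simp
  show "positive (sets borel) (\<lambda>A. \<Sum>i = 1..n. ennreal (q i) * indicator A (y i))"
    unfolding positive_def by simp
  show "countably_additive (sets borel) (\<lambda>A. \<Sum>i = 1..n. ennreal (q i) * indicator A (y i))"
    unfolding countably_additive_def
  proof (intro allI impI)
    fix A :: "nat \<Rightarrow> real set" assume "range A \<subseteq> sets borel" and d: "disjoint_family A"
    have "(\<Sum>j. \<Sum>i = 1..n. ennreal (q i) * indicator (A j) (y i))
        = (\<Sum>i = 1..n. \<Sum>j. ennreal (q i) * indicator (A j) (y i))"
      by (rule suminf_sum) (simp add: summableI)
    also have "\<dots> = (\<Sum>i = 1..n. ennreal (q i) * indicator (\<Union>j. A j) (y i))"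
      by (simp add: suminf_indicator[OF d])
    finally show "(\<Sum>j. \<Sum>i = 1..n. ennreal (q i) * indicator (A j) (y i))
        = (\<Sum>i = 1..n. ennreal (q i) * indicator (\<Union>j. A j) (y i))" .
  qed
qed (rule assms)

lemma sets_discr[simp, measurable_cong]: "sets (discr n y q) = sets borel"
  unfolding discr_def by (subst sets_measure_of) (auto simp: sets.sigma_sets_eq[of borel, simplified])

lemma space_discr[simp]: "space (discr n y q) = UNIV"
  unfolding discr_def by (subst space_measure_of) auto

lemma measure_discr:
  assumes p: "Pi_n n q" and A: "A \<in> sets borel"
  shows "measure (discr n y q) A = (\<Sum>i=1..n. q i * indicator A (y i))"
proof -
  have nn: "\<And>i. i \<in> {1..n} \<Longrightarrow> 0 \<le> q i * indicator A (y i)"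
    using p unfolding Pi_n_def by auto
  have "emeasure (discr n y q) A = (\<Sum>i=1..n. ennreal (q i * indicator A (y i)))"
    unfolding emeasure_discr[OF A]
    by (intro sum.cong refl) (auto simp: indicator_def)
  also have "\<dots> = ennreal (\<Sum>i=1..n. q i * indicator A (y i))"
    using nn by (rule sum_ennreal)
  finally have "measure (discr n y q) A = enn2real (ennreal (\<Sum>i=1..n. q i * indicator A (y i)))"
    unfolding measure_def by simp
  also have "\<dots> = (\<Sum>i=1..n. q i * indicator A (y i))"
    by (rule enn2real_ennreal) (rule sum_nonneg, rule nn)
  finally show ?thesis .
qed

lemma real_distribution_discr:
  assumes p: "Pi_n n q"
  shows "real_distribution (discr n y q)"
proof -
  have nn: "\<And>i. i \<in> {1..n} \<Longrightarrow> 0 \<le> q i" using p unfolding Pi_n_def by auto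
  have "emeasure (discr n y q) UNIV = (\<Sum>i=1..n. ennreal (q i))"
    by (simp add: emeasure_discr)
  also have "\<dots> = ennreal (\<Sum>i=1..n. q i)"
    using nn by (rule sum_ennreal)
  also have "\<dots> = 1" using p unfolding Pi_n_def by simp
  finally have "emeasure (discr n y q) UNIV = 1" .
  then show ?thesis
    unfolding real_distribution_def real_distribution_axioms_def
    by (auto intro!: prob_spaceI)
qed

lemma cdf_discr:
  assumes p: "Pi_n n q"
  shows "cdf (discr n y q) z = (\<Sum>i\<in>{i\<in>{1..n}. y i \<le> z}. q i)"
proof -
  have "cdf (discr n y q) z = (\<Sum>i=1..n. q i * indicator {..z} (y i))"
    unfolding cdf_def by (rule measure_discr[OF p]) simp
  also have "\<dots> = (\<Sum>i=1..n. if y i \<le> z then q i else 0)"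
    by (intro sum.cong refl) (auto simp: indicator_def)
  also have "\<dots> = (\<Sum>i\<in>{i\<in>{1..n}. y i \<le> z}. q i)"
    by (rule sum.inter_filter[symmetric]) simp
  finally show ?thesis .
qed

section \<open>Partial sums and step functions\<close>

lemma Psum_0[simp]: "Psum q 0 = 0" by (simp add: Psum_def)

lemma Psum_n: "Pi_n n q \<Longrightarrow> Psum q n = 1" by (simp add: Psum_def Pi_n_def)

lemma Psum_Suc: "Psum q (Suc i) = Psum q i + q (Suc i)"
  by (simp add: Psum_def)

lemma Psum_mono:
  assumes p: "Pi_n n q" and "i \<le> j" "j \<le> n"
  shows "Psum q i \<le> Psum q j"
  using assms(2,3)
proof (induction j)
  case 0 then show ?case by simp
next
  case (Suc j)
  show ?case
  proof (cases "i = Suc j")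
    case True then show ?thesis by simp
  next
    case False
    then have "Psum q i \<le> Psum q j" using Suc by simp
    moreover have "0 \<le> q (Suc j)" using p Suc unfolding Pi_n_def by auto
    ultimately show ?thesis by (simp add: Psum_Suc)
  qed
qed

lemma Psum_nonneg: "Pi_n n q \<Longrightarrow> i \<le> n \<Longrightarrow> 0 \<le> Psum q i"
  using Psum_mono[of n q 0 i] by simp

lemma Psum_le1: "Pi_n n q \<Longrightarrow> i \<le> n \<Longrightarrow> Psum q i \<le> 1"
  using Psum_mono[of n q i n] Psum_n[of n q] by simp

definition Lidx :: "(nat \<Rightarrow> real) \<Rightarrow> real \<Rightarrow> nat" where
  "Lidx q t = (LEAST k. t < Psum q k)"

definition Gs :: "(nat \<Rightarrow> real) \<Rightarrow> (nat \<Rightarrow> real) \<Rightarrow> real \<Rightarrow> real" where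
  "Gs y q t = y (Lidx q t)"

lemma Lidx_props:
  assumes p: "Pi_n n q" and t: "0 \<le> t" "t < 1"
  shows "1 \<le> Lidx q t" "Lidx q t \<le> n" "t < Psum q (Lidx q t)" "Psum q (Lidx q t - 1) \<le> t"
proof -
  have ex: "t < Psum q n" using Psum_n[OF p] t by simp
  show le: "Lidx q t \<le> n" unfolding Lidx_def by (rule Least_le) (rule ex)
  show lt: "t < Psum q (Lidx q t)" unfolding Lidx_def by (rule LeastI) (rule ex)
  show ge: "1 \<le> Lidx q t"
    using lt t by (cases "Lidx q t") auto
  have "\<not> t < Psum q (Lidx q t - 1)"
    unfolding Lidx_def by (rule not_less_Least) (use ge in \<open>simp add: Lidx_def\<close>)
  then show "Psum q (Lidx q t - 1) \<le> t" by simp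
qed

lemma Lidx_eq:
  assumes p: "Pi_n n q" and l: "1 \<le> l" "l \<le> n" and t: "Psum q (l - 1) \<le> t" "t < Psum q l"
  shows "Lidx q t = l"
  unfolding Lidx_def
proof (rule Least_equality)
  show "t < Psum q l" by (rule t(2))
  fix k assume "t < Psum q k"
  show "l \<le> k"
  proof (rule ccontr)
    assume "\<not> l \<le> k"
    then have "Psum q k \<le> Psum q (l - 1)" using Psum_mono[OF p, of k "l - 1"] l by simp
    then show False using \<open>t < Psum q k\<close> t by simp
  qed
qed

lemma Lidx_mono:
  assumes p: "Pi_n n q" and "0 \<le> t" "t \<le> t'" "t' < 1"
  shows "Lidx q t \<le> Lidx q t'"
  unfolding Lidx_def
  by (rule Least_le) (use Lidx_props(3)[OF p, of t'] assms in \<open>simp add: Lidx_def\<close>)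

lemma Gs_mono:
  assumes x: "Xi n y" and p: "Pi_n n q"
  shows "mono_on {0<..<1} (Gs y q)"
proof (rule mono_onI)
  fix t t' :: real assume "t \<in> {0<..<1}" "t' \<in> {0<..<1}" "t \<le> t'"
  then show "Gs y q t \<le> Gs y q t'"
    unfolding Gs_def using Lidx_mono[OF p, of t t'] Lidx_props[OF p, of t] Lidx_props[OF p, of t']
    by (intro Xi_mono[OF x]) auto
qed

lemma quantile_discr:
  assumes x: "Xi n y" and p: "Pi_n n q" and t: "0 < t" "t < 1"
  shows "quantile (discr n y q) t = Gs y q t"
proof -
  let ?L = "Lidx q t"
  note L = Lidx_props[OF p, of t]
  have nn: "\<And>i. i \<in> {1..n} \<Longrightarrow> 0 \<le> q i" using p unfolding Pi_n_def by auto
  have "{z. cdf (discr n y q) z \<le> t} = {..<y ?L}"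
  proof (intro set_eqI iffI)
    fix z assume "z \<in> {z. cdf (discr n y q) z \<le> t}"
    then have le: "(\<Sum>i\<in>{i\<in>{1..n}. y i \<le> z}. q i) \<le> t" by (simp add: cdf_discr[OF p])
    show "z \<in> {..<y ?L}"
    proof (rule ccontr)
      assume "z \<notin> {..<y ?L}"
      then have "{1..?L} \<subseteq> {i\<in>{1..n}. y i \<le> z}"
        using L t Xi_mono[OF x, of _ ?L] by force
      then have "(\<Sum>i=1..?L. q i) \<le> (\<Sum>i\<in>{i\<in>{1..n}. y i \<le> z}. q i)"
        by (intro sum_mono2) (auto intro: nn)
      then show False using le L t by (simp add: Psum_def)
    qed
  next
    fix z assume "z \<in> {..<y ?L}"
    have "{i\<in>{1..n}. y i \<le> z} \<subseteq> {1..?L - 1}"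
    proof
      fix i assume i: "i \<in> {i\<in>{1..n}. y i \<le> z}"
      have "\<not> ?L \<le> i"
      proof
        assume "?L \<le> i"
        then have "y ?L \<le> y i" using Xi_mono[OF x, of ?L i] L t i by auto
        then show False using i \<open>z \<in> {..<y ?L}\<close> by auto
      qed
      then show "i \<in> {1..?L - 1}" using i by auto
    qed
    then have "(\<Sum>i\<in>{i\<in>{1..n}. y i \<le> z}. q i) \<le> (\<Sum>i=1..?L - 1. q i)"
      by (intro sum_mono2) (use L t in \<open>auto intro!: nn\<close>)
    then show "z \<in> {z. cdf (discr n y q) z \<le> t}"
      using L t by (simp add: cdf_discr[OF p] Psum_def)
  qed
  then show ?thesis unfolding quantile_def Gs_def by simp
qed

section \<open>Convexity of the power function\<close>

lemma tangent_powr: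
  fixes r m u :: real
  assumes r: "r \<ge> 1" and m: "m > 0" and u: "u \<ge> 0"
  shows "m powr r + r * m powr (r - 1) * (u - m) \<le> u powr r"
    and "r > 1 \<Longrightarrow> u \<noteq> m \<Longrightarrow> m powr r + r * m powr (r - 1) * (u - m) < u powr r"
proof -
  have mr: "m powr r = m * m powr (r - 1)"
    using m by (simp add: powr_mult_base)
  have D: "\<And>z. z > 0 \<Longrightarrow> ((\<lambda>z. z powr r) has_real_derivative r * z powr (r - 1)) (at z)"
    by (rule has_real_derivative_powr)
  have gt: "r \<noteq> 1 \<Longrightarrow> u \<noteq> m \<Longrightarrow> m powr r + r * m powr (r - 1) * (u - m) < u powr r"
  proof -
    assume r1: "r \<noteq> 1" and um: "u \<noteq> m"
    show ?thesis
    proof (cases "u = 0")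
      case True
      have "0 < (r - 1) * m powr r" using r r1 m by simp
      then show ?thesis using True mr by (simp add: algebra_simps)
    next
      case False
      then have u0: "u > 0" using u by simp
      show ?thesis
      proof (cases "m < u")
        case True
        obtain z where z: "m < z" "z < u" "u powr r - m powr r = (u - m) * (r * z powr (r - 1))"
          using MVT2[OF True, of "\<lambda>z. z powr r" "\<lambda>z. r * z powr (r - 1)"] D m by force
        have "m powr (r - 1) < z powr (r - 1)"
          using z m r r1 by (intro powr_less_mono2) auto
        then have "(u - m) * (r * m powr (r - 1)) < (u - m) * (r * z powr (r - 1))"
          using True r by (intro mult_strict_left_mono) auto
        then show ?thesis using z by (simp add: algebra_simps)
      next
        case False
        then have um': "u < m" using um by simp
        obtain z where z: "u < z" "z < m" "m powr r - u powr r = (m - u) * (r * z powr (r - 1))"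
          using MVT2[OF um', of "\<lambda>z. z powr r" "\<lambda>z. r * z powr (r - 1)"] D u0 by force
        have "z powr (r - 1) < m powr (r - 1)"
          using z u0 r r1 by (intro powr_less_mono2) auto
        then have "(m - u) * (r * z powr (r - 1)) < (m - u) * (r * m powr (r - 1))"
          using um' r by (intro mult_strict_left_mono) auto
        then show ?thesis using z by (simp add: algebra_simps)
      qed
    qed
  qed
  show "m powr r + r * m powr (r - 1) * (u - m) \<le> u powr r"
  proof (cases "r = 1 \<or> u = m")
    case True then show ?thesis
      using u m by (auto simp: powr_mult_base)
  next
    case False then show ?thesis using gt by (simp add: less_imp_le)
  qed
  show "r > 1 \<Longrightarrow> u \<noteq> m \<Longrightarrow> m powr r + r * m powr (r - 1) * (u - m) < u powr r"
    using gt by simp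
qed

lemma convex_abs_powr:
  fixes r a b l :: real
  assumes r: "r \<ge> 1" and l: "0 \<le> l" "l \<le> 1"
  shows "\<bar>l * a + (1 - l) * b\<bar> powr r \<le> l * \<bar>a\<bar> powr r + (1 - l) * \<bar>b\<bar> powr r"
proof -
  define m where "m = l * \<bar>a\<bar> + (1 - l) * \<bar>b\<bar>"
  have "\<bar>l * a + (1 - l) * b\<bar> \<le> m"
    unfolding m_def using l by (metis abs_mult abs_of_nonneg abs_triangle_ineq diff_ge_0_iff_ge)
  then have le1: "\<bar>l * a + (1 - l) * b\<bar> powr r \<le> m powr r" using r by (intro powr_mono2) auto
  show ?thesis
  proof (cases "m = 0")
    case True
    then show ?thesis using le1 l by (auto intro: add_nonneg_nonneg)
  next
    case False
    then have mpos: "m > 0" unfolding m_def using l by (smt (verit) mult_nonneg_nonneg abs_ge_zero)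
    have ta: "m powr r + r * m powr (r - 1) * (\<bar>a\<bar> - m) \<le> \<bar>a\<bar> powr r"
      by (rule tangent_powr(1)[OF r mpos]) simp
    have tb: "m powr r + r * m powr (r - 1) * (\<bar>b\<bar> - m) \<le> \<bar>b\<bar> powr r"
      by (rule tangent_powr(1)[OF r mpos]) simp
    have "l * (m powr r + r * m powr (r - 1) * (\<bar>a\<bar> - m)) + (1 - l) * (m powr r + r * m powr (r - 1) * (\<bar>b\<bar> - m))
        \<le> l * \<bar>a\<bar> powr r + (1 - l) * \<bar>b\<bar> powr r"
      using ta tb l by (intro add_mono mult_left_mono) auto
    moreover have "l * (m powr r + r * m powr (r - 1) * (\<bar>a\<bar> - m)) + (1 - l) * (m powr r + r * m powr (r - 1) * (\<bar>b\<bar> - m))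
        = m powr r + r * m powr (r - 1) * (l * \<bar>a\<bar> + (1 - l) * \<bar>b\<bar> - m)"
      by (simp add: algebra_simps)
    ultimately show ?thesis using le1 unfolding m_def by simp
  qed
qed

lemma strict_mid_abs_powr:
  fixes r a b :: real
  assumes r: "r > 1" and ab: "a \<noteq> b"
  shows "\<bar>(a + b) / 2\<bar> powr r < (\<bar>a\<bar> powr r + \<bar>b\<bar> powr r) / 2"
proof (cases "\<bar>a\<bar> = \<bar>b\<bar>")
  case True
  then have "b = - a" "a \<noteq> 0" using ab by (auto simp: abs_eq_iff)
  then show ?thesis using r by simp
next
  case False
  define m where "m = (\<bar>a\<bar> + \<bar>b\<bar>) / 2"
  have mpos: "m > 0" unfolding m_def using False by auto
  have "\<bar>(a + b) / 2\<bar> \<le> m" unfolding m_def by simp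
  then have le1: "\<bar>(a + b) / 2\<bar> powr r \<le> m powr r" using r by (intro powr_mono2) auto
  have "\<bar>a\<bar> \<noteq> m \<or> \<bar>b\<bar> \<noteq> m" using False unfolding m_def by auto
  then have "2 * m powr r + r * m powr (r - 1) * (\<bar>a\<bar> - m) + r * m powr (r - 1) * (\<bar>b\<bar> - m)
      < \<bar>a\<bar> powr r + \<bar>b\<bar> powr r"
  proof
    assume "\<bar>a\<bar> \<noteq> m"
    then show ?thesis
      using tangent_powr(2)[OF _ mpos _ r, of "\<bar>a\<bar>"] tangent_powr(1)[OF _ mpos, of r "\<bar>b\<bar>"] r by force
  next
    assume "\<bar>b\<bar> \<noteq> m"
    then show ?thesis
      using tangent_powr(2)[OF _ mpos _ r, of "\<bar>b\<bar>"] tangent_powr(1)[OF _ mpos, of r "\<bar>a\<bar>"] r by force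
  qed
  moreover have "r * m powr (r - 1) * (\<bar>a\<bar> - m) + r * m powr (r - 1) * (\<bar>b\<bar> - m) = 0"
    unfolding m_def by (simp add: algebra_simps)
  ultimately show ?thesis using le1 by simp
qed

lemma exchange_abs_powr:
  fixes r a b c d :: real
  assumes r: "r \<ge> 1" and "a \<le> b" "b \<le> d" "a \<le> c" "c \<le> d" "a + d = b + c"
  shows "\<bar>b\<bar> powr r + \<bar>c\<bar> powr r \<le> \<bar>a\<bar> powr r + \<bar>d\<bar> powr r"
proof (cases "a = d")
  case True
  then have "b = a" "c = a" using assms by auto
  then show ?thesis using True by simp
next
  case False
  then have ad: "a < d" using assms by simp
  define l where "l = (d - b) / (d - a)"
  have l: "0 \<le> l" "l \<le> 1" unfolding l_def using assms ad by (auto simp: divide_simps)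
  have e: "l * (d - a) = d - b" unfolding l_def using ad by simp
  have "l * a + (1 - l) * d = d - l * (d - a)" by (simp add: algebra_simps)
  then have b: "b = l * a + (1 - l) * d" using e by simp
  have "(1 - l) * a + (1 - (1 - l)) * d = a + l * (d - a)" by (simp add: algebra_simps)
  then have c: "c = (1 - l) * a + (1 - (1 - l)) * d" using e assms(6) by linarith
  have "\<bar>b\<bar> powr r \<le> l * \<bar>a\<bar> powr r + (1 - l) * \<bar>d\<bar> powr r"
    unfolding b by (rule convex_abs_powr[OF r l])
  moreover have "\<bar>c\<bar> powr r \<le> (1 - l) * \<bar>a\<bar> powr r + (1 - (1 - l)) * \<bar>d\<bar> powr r"
    unfolding c by (rule convex_abs_powr[OF r]) (use l in auto)
  ultimately show ?thesis by (simp add: algebra_simps)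
qed

lemma g_antimono:
  fixes r v w z1 z2 :: real
  assumes r: "r \<ge> 1" and vw: "v \<le> w" and z: "z1 \<le> z2"
  shows "\<bar>w - z2\<bar> powr r - \<bar>v - z2\<bar> powr r \<le> \<bar>w - z1\<bar> powr r - \<bar>v - z1\<bar> powr r"
proof -
  have "\<bar>w - z2\<bar> powr r + \<bar>v - z1\<bar> powr r \<le> \<bar>v - z2\<bar> powr r + \<bar>w - z1\<bar> powr r"
    by (rule exchange_abs_powr[OF r]) (use vw z in auto)
  then show ?thesis by linarith
qed

lemma g_mono:
  fixes r v w z1 z2 :: real
  assumes r: "r \<ge> 1" and vw: "w \<le> v" and z: "z1 \<le> z2"
  shows "\<bar>w - z1\<bar> powr r - \<bar>v - z1\<bar> powr r \<le> \<bar>w - z2\<bar> powr r - \<bar>v - z2\<bar> powr r"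
proof -
  have "\<bar>w - z1\<bar> powr r + \<bar>v - z2\<bar> powr r \<le> \<bar>w - z2\<bar> powr r + \<bar>v - z1\<bar> powr r"
    by (rule exchange_abs_powr[OF r]) (use vw z in auto)
  then show ?thesis by linarith
qed

section \<open>Representation of monotone finite-valued functions\<close>

lemma AE_Om_finite:
  assumes "finite S"
  shows "AE t in Om. t \<notin> S"
proof -
  have "AE t in lborel. t \<notin> S"
    by (rule AE_not_in[OF finite_imp_null_set_lborel[OF assms]])
  then show ?thesis
    unfolding Om_def by (subst AE_restrict_space_iff) (auto elim: AE_mp)
qed

lemma repr:
  fixes G :: "real \<Rightarrow> real"
  assumes mono: "mono_on {0<..<1} G" and fin: "finite (G ` {0<..<1})"
    and card: "card (G ` {0<..<1}) \<le> n"
  shows "\<exists>y q. Xi n y \<and> Pi_n n q \<and>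
           (\<forall>t\<in>{0<..<1}. t \<notin> Psum q ` {0..n} \<longrightarrow> Gs y q t = G t)"
proof -
  define V where "V = G ` {0<..<1}"
  define m where "m = card V"
  define vs where "vs = sorted_list_of_set V"
  have Vne: "V \<noteq> {}" unfolding V_def by auto
  have finV: "finite V" using fin V_def by simp
  have m1: "1 \<le> m" unfolding m_def using Vne finV by (simp add: Suc_le_eq card_gt_0_iff)
  have mn: "m \<le> n" using card V_def m_def by simp
  have len: "length vs = m" unfolding vs_def m_def by simp
  have setvs: "set vs = V" unfolding vs_def using finV by simp
  have strict: "sorted_wrt (<) vs" unfolding vs_def by (rule strict_sorted_list_of_set)
  have sorted: "sorted vs" unfolding vs_def by simp
  define y where "y k = vs ! (min (k - 1) (m - 1))" for k
  define A where "A k = {t\<in>{0<..<1}. G t \<le> y k}" for k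
  define Q where "Q k = (if k = 0 then 0 else Sup (A k))" for k
  define q where "q k = Q k - Q (k - 1)" for k
  have yV: "y k \<in> V" for k
    unfolding y_def using len m1 setvs by (metis min.cobounded2 nth_mem le_less_trans diff_less zero_less_one less_le_trans order.refl)
  have Ane: "A k \<noteq> {}" for k
  proof -
    obtain t where "t \<in> {0<..<1}" "G t = y k" using yV[of k] unfolding V_def by auto
    then show ?thesis unfolding A_def by auto
  qed
  have Asub: "A k \<subseteq> {0<..<1}" for k unfolding A_def by auto
  have Abdd: "bdd_above (A k)" for k by (rule bdd_aboveI[where M=1]) (use Asub in force)
  have Qpos: "0 < Q k" if "k \<ge> 1" for k
  proof -
    obtain t where "t \<in> A k" using Ane[of k] by auto
    then have "t \<le> Sup (A k)" by (intro cSup_upper Abdd)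
    then show ?thesis using \<open>t \<in> A k\<close> Asub[of k] that unfolding Q_def by auto
  qed
  have ymono: "y k \<le> y k'" if "k \<le> k'" for k k'
    unfolding y_def using that len m1 by (intro sorted_nth_mono[OF sorted]) auto
  have Qmono: "Q k \<le> Q k'" if "1 \<le> k" "k \<le> k'" for k k'
  proof -
    have "A k \<subseteq> A k'" unfolding A_def using ymono[OF that(2)] by auto
    then show ?thesis unfolding Q_def using that by (auto intro!: cSup_subset_mono Ane Abdd)
  qed
  have Qtop: "Q k = 1" if "m \<le> k" for k
  proof -
    have "A k = {0<..<1}"
    proof -
      { fix t :: real assume t: "t \<in> {0<..<1}"
        have "G t \<in> set vs" using t setvs V_def by auto
        then obtain j where j: "j < m" "vs ! j = G t" using len by (auto simp: in_set_conv_nth)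
        have "min (k - 1) (m - 1) = m - 1" using that by simp
        then have "y k = vs ! (m - 1)" unfolding y_def by simp
        moreover have "vs ! j \<le> vs ! (m - 1)" using j len by (intro sorted_nth_mono[OF sorted]) auto
        ultimately have "G t \<le> y k" using j by simp }
      then show ?thesis unfolding A_def by auto
    qed
    then show ?thesis unfolding Q_def using that m1 by simp
  qed
  have PsQ: "Psum q k = Q k" for k
    by (induction k) (auto simp: Psum_Suc q_def Q_def)
  have Xi: "Xi n y" unfolding Xi_def using ymono by auto
  have Pi: "Pi_n n q"
    unfolding Pi_n_def
  proof
    show "\<forall>i\<in>{1..n}. 0 \<le> q i"
    proof
      fix i assume i: "i \<in> {1..n}"
      show "0 \<le> q i"
      proof (cases "i = 1")
        case True then show ?thesis using Qpos[of 1] by (simp add: q_def Q_def)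
      next
        case False
        then have "1 \<le> i - 1" using i by auto
        then show ?thesis using Qmono[of "i - 1" i] by (simp add: q_def)
      qed
    qed
    have "(\<Sum>i = 1..n. q i) = Psum q n" by (simp add: Psum_def)
    then show "(\<Sum>i = 1..n. q i) = 1" using PsQ Qtop[OF mn] by simp
  qed
  have main: "Gs y q t = G t" if t: "t \<in> {0<..<1}" "t \<notin> Psum q ` {0..n}" for t
  proof -
    have "G t \<in> set vs" using t setvs V_def by auto
    then obtain j where j: "j < m" "vs ! j = G t" using len by (auto simp: in_set_conv_nth)
    define k where "k = Suc j"
    have yk: "y k = G t" unfolding y_def k_def using j by simp
    have k1: "1 \<le> k" "k \<le> n" using j mn unfolding k_def by auto
    have "t \<in> A k" using t yk unfolding A_def by simp
    then have "t \<le> Q k" unfolding Q_def using k1 by (auto intro!: cSup_upper Abdd)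
    moreover have "t \<noteq> Q k" using t(2) k1 PsQ by force
    ultimately have tlt: "t < Q k" by simp
    have tge: "Q (k - 1) \<le> t"
    proof (cases "k = 1")
      case True then show ?thesis using t by (simp add: Q_def)
    next
      case False
      then have kk: "k - 1 \<ge> 1" using k1 by simp
      have "Sup (A (k - 1)) \<le> t"
      proof (rule cSup_least[OF Ane])
        fix s assume s: "s \<in> A (k - 1)"
        show "s \<le> t"
        proof (rule ccontr)
          assume "\<not> s \<le> t"
          then have "G t \<le> G s" using s t Asub mono by (auto intro!: mono_onD[OF mono])
          also have "G s \<le> y (k - 1)" using s unfolding A_def by simp
          also have "y (k - 1) = vs ! (j - 1)" unfolding y_def k_def using j by (simp add: min_def)
          also have "vs ! (j - 1) < vs ! j" using j False k_def len
            by (intro sorted_wrt_nth_less[OF strict]) auto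
          finally show False using j by simp
        qed
      qed
      then show ?thesis unfolding Q_def using kk by simp
    qed
    have "Lidx q t = k"
      by (rule Lidx_eq[OF Pi k1]) (use tge tlt PsQ in auto)
    then show ?thesis unfolding Gs_def using yk by simp
  qed
  show ?thesis using Xi Pi main by blast
qed

section \<open>The cost functional\<close>

locale QS =
  fixes r :: real and M :: "real measure"
  assumes r: "r \<ge> 1" and M: "in_Pr r M"
begin

lemma RD: "real_distribution M" using M unfolding in_Pr_def by simp

abbreviation f where "f \<equiv> quantile M"

definition cost :: "(real \<Rightarrow> real) \<Rightarrow> real" where
  "cost G = integral\<^sup>L Om (\<lambda>t. \<bar>G t - f t\<bar> powr r)"

lemma f_meas: "f \<in> borel_measurable Om"
  by (rule mono_meas_Om[OF q_mono_on[OF RD]])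

lemma f_int: "integrable Om (\<lambda>t. \<bar>f t\<bar> powr r)"
proof -
  have "integrable M (\<lambda>x. \<bar>x\<bar> powr r)" using M unfolding in_Pr_def by simp
  then have "integrable (distr Om borel f) (\<lambda>x. \<bar>x\<bar> powr r)" using q_distr[OF RD] by simp
  then show ?thesis by (subst (asm) integrable_distr_eq[OF f_meas]) auto
qed

lemma int_bdd:
  assumes G: "G \<in> borel_measurable Om" and B: "\<And>t. t \<in> {0<..<1} \<Longrightarrow> \<bar>G t\<bar> \<le> B"
  shows "integrable Om (\<lambda>t. \<bar>G t - f t\<bar> powr r)"
proof (rule Bochner_Integration.integrable_bound[where f="\<lambda>t. 2 powr r * (\<bar>B\<bar> powr r + \<bar>f t\<bar> powr r)"])
  interpret O: prob_space Om by (rule prob_space_Om)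
  show "integrable Om (\<lambda>t. 2 powr r * (\<bar>B\<bar> powr r + \<bar>f t\<bar> powr r))"
    using f_int by auto
  show "(\<lambda>t. \<bar>G t - f t\<bar> powr r) \<in> borel_measurable Om" using G f_meas by measurable
  show "AE t in Om. norm (\<bar>G t - f t\<bar> powr r) \<le> norm (2 powr r * (\<bar>B\<bar> powr r + \<bar>f t\<bar> powr r))"
  proof (rule AE_I2)
    fix t assume t: "t \<in> space Om"
    have "\<bar>G t - f t\<bar> \<le> 2 * max \<bar>B\<bar> \<bar>f t\<bar>" using B[of t] t by auto
    then have "\<bar>G t - f t\<bar> powr r \<le> (2 * max \<bar>B\<bar> \<bar>f t\<bar>) powr r"
      using r by (intro powr_mono2) auto
    also have "\<dots> = 2 powr r * max \<bar>B\<bar> \<bar>f t\<bar> powr r" by (simp add: powr_mult)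
    also have "max \<bar>B\<bar> \<bar>f t\<bar> powr r \<le> \<bar>B\<bar> powr r + \<bar>f t\<bar> powr r"
      by (simp add: max_def)
    finally show "norm (\<bar>G t - f t\<bar> powr r) \<le> norm (2 powr r * (\<bar>B\<bar> powr r + \<bar>f t\<bar> powr r))"
      by simp
  qed
qed

lemma cost_nonneg: "0 \<le> cost G"
  unfolding cost_def by (rule integral_nonneg_AE) simp

lemma Gs_bdd:
  assumes "Pi_n n q" "t \<in> {0<..<1}"
  shows "\<bar>Gs y q t\<bar> \<le> (\<Sum>i=1..n. \<bar>y i\<bar>)"
proof -
  have "Lidx q t \<in> {1..n}" using Lidx_props[OF assms(1), of t] assms(2) by auto
  then show ?thesis unfolding Gs_def by (rule member_le_sum) auto
qed

lemma d_r_cost: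
  assumes x: "Xi n y" and p: "Pi_n n q"
  shows "d_r r (discr n y q) M = cost (Gs y q) powr (1 / r)"
proof -
  have "integral\<^sup>L Om (\<lambda>t. \<bar>quantile (discr n y q) t - f t\<bar> powr r)
      = integral\<^sup>L Om (\<lambda>t. \<bar>Gs y q t - f t\<bar> powr r)"
    by (rule Bochner_Integration.integral_cong) (auto simp: quantile_discr[OF x p])
  then show ?thesis unfolding d_r_def set_int_Om cost_def by simp
qed

lemma fin_bdd:
  assumes "finite ((G::real\<Rightarrow>real) ` {0<..<1})"
  shows "\<exists>B. \<forall>t\<in>{0<..<1}. \<bar>G t\<bar> \<le> B"
proof -
  have "\<forall>t\<in>{0<..<1}. \<bar>G t\<bar> \<le> (\<Sum>v\<in>G ` {0<..<1}. \<bar>v\<bar>)"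
    using assms by (auto intro!: member_le_sum[where f="\<lambda>v. \<bar>v\<bar>"])
  then show ?thesis by blast
qed

lemma cost_le:
  assumes x: "Xi n x" and p: "Pi_n n p"
    and opt: "\<And>y q. Xi n y \<Longrightarrow> Pi_n n q \<Longrightarrow> d_r r (discr n x p) M \<le> d_r r (discr n y q) M"
    and mono: "mono_on {0<..<1} G" and fin: "finite (G ` {0<..<1})"
    and card: "card (G ` {0<..<1}) \<le> n"
  shows "cost (Gs x p) \<le> cost G"
proof -
  obtain y q where y: "Xi n y" and q: "Pi_n n q"
    and eq: "\<forall>t\<in>{0<..<1}. t \<notin> Psum q ` {0..n} \<longrightarrow> Gs y q t = G t"
    using repr[OF mono fin card] by blast
  have "cost (Gs y q) = cost G"
    unfolding cost_def
  proof (rule integral_cong_AE)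
    show "(\<lambda>t. \<bar>Gs y q t - f t\<bar> powr r) \<in> borel_measurable Om"
      using mono_meas_Om[OF Gs_mono[OF y q]] f_meas by measurable
    show "(\<lambda>t. \<bar>G t - f t\<bar> powr r) \<in> borel_measurable Om"
      using mono_meas_Om[OF mono] f_meas by measurable
    show "AE t in Om. \<bar>Gs y q t - f t\<bar> powr r = \<bar>G t - f t\<bar> powr r" (is ?thesis)
    proof -
      have fin: "AE t in Om. t \<notin> Psum q ` {0..n}" by (rule AE_Om_finite) simp
      show ?thesis using AE_space fin by eventually_elim (use eq in auto)
    qed
  qed
  have "d_r r (discr n x p) M \<le> d_r r (discr n y q) M" by (rule opt[OF y q])
  then have le: "cost (Gs x p) powr (1/r) \<le> cost (Gs y q) powr (1/r)"
    by (simp add: d_r_cost[OF x p] d_r_cost[OF y q])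
  have "cost (Gs x p) = (cost (Gs x p) powr (1/r)) powr r"
    using r cost_nonneg by (simp add: powr_powr)
  also have "\<dots> \<le> (cost (Gs y q) powr (1/r)) powr r"
    by (rule powr_mono2) (use le r in auto)
  also have "\<dots> = cost (Gs y q)"
    using r cost_nonneg by (simp add: powr_powr)
  finally show ?thesis using \<open>cost (Gs y q) = cost G\<close> by simp
qed

end

lemma patch_co:
  fixes G :: "real \<Rightarrow> real"
  assumes mono: "mono_on {0<..<1} G"
    and lo: "\<And>t. t \<in> {0<..<1} \<Longrightarrow> t < a \<Longrightarrow> G t \<le> v"
    and hi: "\<And>t. t \<in> {0<..<1} \<Longrightarrow> b \<le> t \<Longrightarrow> v \<le> G t"
  shows "mono_on {0<..<1} (\<lambda>t. if a \<le> t \<and> t < b then v else G t)"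
proof (rule mono_onI)
  fix t t' :: real assume t: "t \<in> {0<..<1}" "t' \<in> {0<..<1}" "t \<le> t'"
  show "(if a \<le> t \<and> t < b then v else G t) \<le> (if a \<le> t' \<and> t' < b then v else G t')"
    using lo[OF t(1)] hi[OF t(2)] mono_onD[OF mono t] t(3) by auto
qed

lemma patch_oo:
  fixes G :: "real \<Rightarrow> real"
  assumes mono: "mono_on {0<..<1} G"
    and lo: "\<And>t. t \<in> {0<..<1} \<Longrightarrow> t \<le> a \<Longrightarrow> G t \<le> v"
    and hi: "\<And>t. t \<in> {0<..<1} \<Longrightarrow> b \<le> t \<Longrightarrow> v \<le> G t"
  shows "mono_on {0<..<1} (\<lambda>t. if a < t \<and> t < b then v else G t)"
proof (rule mono_onI)
  fix t t' :: real assume t: "t \<in> {0<..<1}" "t' \<in> {0<..<1}" "t \<le> t'"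
  show "(if a < t \<and> t < b then v else G t) \<le> (if a < t' \<and> t' < b then v else G t')"
    using lo[OF t(1)] hi[OF t(2)] mono_onD[OF mono t] t(3) by auto
qed

locale OPT = QS +
  fixes n :: nat and x p :: "nat \<Rightarrow> real"
  assumes x: "Xi n x" and p: "Pi_n n p"
    and opt: "\<And>y q. Xi n y \<Longrightarrow> Pi_n n q \<Longrightarrow> d_r r (discr n x p) M \<le> d_r r (discr n y q) M"
begin

abbreviation G0 where "G0 \<equiv> Gs x p"

lemma n1: "1 \<le> n"
  using p unfolding Pi_n_def by (cases n) auto

lemma G0_mono: "mono_on {0<..<1} G0" by (rule Gs_mono[OF x p])

lemma G0_meas: "G0 \<in> borel_measurable Om" by (rule mono_meas_Om[OF G0_mono])

lemma G0_img: "t \<in> {0<..<1} \<Longrightarrow> G0 t \<in> x ` {1..n}"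
  unfolding Gs_def using Lidx_props[OF p, of t] by auto

lemma G0_int: "integrable Om (\<lambda>t. \<bar>G0 t - f t\<bar> powr r)"
  by (rule int_bdd[OF G0_meas]) (rule Gs_bdd[OF p])

lemma L_le: "t \<in> {0<..<1} \<Longrightarrow> t < Psum p i \<Longrightarrow> Lidx p t \<le> i"
  unfolding Lidx_def by (rule Least_le) simp

lemma L_ge: "t \<in> {0<..<1} \<Longrightarrow> Psum p i \<le> t \<Longrightarrow> i \<le> n \<Longrightarrow> Suc i \<le> Lidx p t"
proof (rule ccontr)
  assume t: "t \<in> {0<..<1}" "Psum p i \<le> t" "i \<le> n" "\<not> Suc i \<le> Lidx p t"
  then have "Psum p (Lidx p t) \<le> Psum p i" by (intro Psum_mono[OF p]) auto
  then show False using Lidx_props(3)[OF p, of t] t by auto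
qed

lemma G0_le: "t \<in> {0<..<1} \<Longrightarrow> t < Psum p i \<Longrightarrow> i \<le> n \<Longrightarrow> G0 t \<le> x i"
  unfolding Gs_def using L_le[of t i] Lidx_props[OF p, of t] by (intro Xi_mono[OF x]) auto

lemma G0_ge: "t \<in> {0<..<1} \<Longrightarrow> Psum p i \<le> t \<Longrightarrow> Suc i \<le> n \<Longrightarrow> x (Suc i) \<le> G0 t"
  unfolding Gs_def using L_ge[of t i] Lidx_props[OF p, of t] by (intro Xi_mono[OF x]) auto

lemma better_false:
  assumes mono: "mono_on {0<..<1} G" and img: "G ` {0<..<1} \<subseteq> V" "finite V" "card V \<le> n"
    and less: "cost G < cost G0"
  shows False
proof -
  have fin: "finite (G ` {0<..<1})" using img finite_subset by blast
  have "card (G ` {0<..<1}) \<le> n" using img card_mono le_trans by blast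
  then have "cost G0 \<le> cost G" using cost_le[OF x p opt mono fin] by blast
  then show False using less by simp
qed

lemma strict_contra:
  assumes mono: "mono_on {0<..<1} G" and img: "G ` {0<..<1} \<subseteq> V" "finite V" "card V \<le> n"
    and le: "\<And>t. t \<in> {0<..<1} \<Longrightarrow> \<bar>G t - f t\<bar> powr r \<le> \<bar>G0 t - f t\<bar> powr r"
    and ab: "a < b" "0 \<le> a" "b \<le> 1"
    and lt: "\<And>t. t \<in> {a<..<b} \<Longrightarrow> \<bar>G t - f t\<bar> powr r < \<bar>G0 t - f t\<bar> powr r"
  shows False
proof (rule better_false[OF mono img])
  interpret O: prob_space Om by (rule prob_space_Om)
  have fin: "finite (G ` {0<..<1})" using img finite_subset by blast
  obtain B where B: "\<forall>t\<in>{0<..<1}. \<bar>G t\<bar> \<le> B" using fin_bdd[OF fin] by blast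
  have intG: "integrable Om (\<lambda>t. \<bar>G t - f t\<bar> powr r)"
    by (rule int_bdd[OF mono_meas_Om[OF mono]]) (use B in auto)
  have sub: "{a<..<b} \<subseteq> {0<..<1}" using ab by auto
  show "cost G < cost G0"
    unfolding cost_def
  proof (rule O.integral_less_AE[OF intG G0_int])
    show "emeasure Om {a<..<b} \<noteq> 0" using ab by (simp add: emeasure_Om[OF sub])
    show "{a<..<b} \<in> sets Om" using sub unfolding Om_def by (simp add: sets_restrict_space_iff)
    show "AE t in Om. t \<in> {a<..<b} \<longrightarrow> \<bar>G t - f t\<bar> powr r \<noteq> \<bar>G0 t - f t\<bar> powr r"
      using lt by (auto intro!: AE_I2 dest: less_imp_neq)
    show "AE t in Om. \<bar>G t - f t\<bar> powr r \<le> \<bar>G0 t - f t\<bar> powr r"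
      using le by (auto intro!: AE_I2)
  qed
qed

lemma card_x: "card (x ` {1..n}) \<le> n"
  using card_image_le[of "{1..n}" x] by simp

lemma part_i_lower:
  assumes i: "1 \<le> i" "i \<le> n - 1" and xi: "x i < x (Suc i)"
  shows "measure M {..< (x i + x (Suc i)) / 2} \<le> Psum p i"
proof (rule ccontr)
  interpret real_distribution M by (rule RD)
  define c where "c = (x i + x (Suc i)) / 2"
  define T where "T = measure M {..<c}"
  assume "\<not> measure M {..< (x i + x (Suc i)) / 2} \<le> Psum p i"
  then have T: "Psum p i < T" unfolding T_def c_def by simp
  have T1: "T \<le> 1" unfolding T_def by simp
  have in1: "Suc i \<le> n" using i n1 by simp
  have P0: "0 \<le> Psum p i" using Psum_nonneg[OF p, of i] in1 by simp
  define G' where "G' t = (if Psum p i \<le> t \<and> t < T then x i else G0 t)" for t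
  have mono: "mono_on {0<..<1} G'"
    unfolding G'_def
  proof (rule patch_co[OF G0_mono])
    fix t :: real assume t: "t \<in> {0<..<1}"
    show "t < Psum p i \<Longrightarrow> G0 t \<le> x i" using G0_le[OF t] in1 by simp
    show "T \<le> t \<Longrightarrow> x i \<le> G0 t" using G0_ge[OF t, of i] in1 T xi by simp
  qed
  have img: "G' ` {0<..<1} \<subseteq> x ` {1..n}"
    unfolding G'_def using G0_img i in1 by auto
  have strict: "\<bar>G' t - f t\<bar> powr r < \<bar>G0 t - f t\<bar> powr r"
    if t: "t \<in> {0<..<1}" "Psum p i \<le> t" "t < T" for t
  proof -
    have ft: "f t < c" using q_lt_of_lt_left[OF RD, of t c] t unfolding T_def by simp
    have g: "x (Suc i) \<le> G0 t" using G0_ge[OF t(1) t(2)] in1 by simp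
    have "\<bar>x i - f t\<bar> < \<bar>G0 t - f t\<bar>" using ft g xi unfolding c_def by auto
    then show ?thesis using t r unfolding G'_def by (intro powr_less_mono2) auto
  qed
  show False
  proof (rule strict_contra[OF mono img _ card_x])
    show "finite (x ` {1..n})" by simp
    fix t :: real assume t: "t \<in> {0<..<1}"
    show "\<bar>G' t - f t\<bar> powr r \<le> \<bar>G0 t - f t\<bar> powr r"
      using strict[OF t] unfolding G'_def by (cases "Psum p i \<le> t \<and> t < T") auto
  next
    show "Psum p i < T" "0 \<le> Psum p i" "T \<le> 1" by (fact T P0 T1)+
    fix t :: real assume "t \<in> {Psum p i<..<T}"
    then show "\<bar>G' t - f t\<bar> powr r < \<bar>G0 t - f t\<bar> powr r"
      using strict P0 T1 by auto
  qed
qed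

lemma part_i_upper:
  assumes i: "1 \<le> i" "i \<le> n - 1" and xi: "x i < x (Suc i)"
  shows "Psum p i \<le> measure M {.. (x i + x (Suc i)) / 2}"
proof (rule ccontr)
  interpret real_distribution M by (rule RD)
  define c where "c = (x i + x (Suc i)) / 2"
  define T where "T = cdf M c"
  assume "\<not> Psum p i \<le> measure M {.. (x i + x (Suc i)) / 2}"
  then have T: "T < Psum p i" unfolding T_def c_def cdf_def by simp
  have T0: "0 \<le> T" unfolding T_def by (rule cdf_nonneg)
  have in1: "Suc i \<le> n" using i n1 by simp
  have P1: "Psum p i \<le> 1" using Psum_le1[OF p, of i] in1 by simp
  define G' where "G' t = (if T < t \<and> t < Psum p i then x (Suc i) else G0 t)" for t
  have mono: "mono_on {0<..<1} G'"
    unfolding G'_def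
  proof (rule patch_oo[OF G0_mono])
    fix t :: real assume t: "t \<in> {0<..<1}"
    show "t \<le> T \<Longrightarrow> G0 t \<le> x (Suc i)" using G0_le[OF t, of i] in1 T xi by simp
    show "Psum p i \<le> t \<Longrightarrow> x (Suc i) \<le> G0 t" using G0_ge[OF t, of i] in1 by simp
  qed
  have img: "G' ` {0<..<1} \<subseteq> x ` {1..n}"
    unfolding G'_def using G0_img i in1 by auto
  have strict: "\<bar>G' t - f t\<bar> powr r < \<bar>G0 t - f t\<bar> powr r"
    if t: "t \<in> {0<..<1}" "T < t" "t < Psum p i" for t
  proof -
    have ft: "c < f t" using q_gt_of_cdf_lt[OF RD, of t c] t unfolding T_def by simp
    have g: "G0 t \<le> x i" using G0_le[OF t(1) t(3)] in1 by simp
    have "\<bar>x (Suc i) - f t\<bar> < \<bar>G0 t - f t\<bar>" using ft g xi unfolding c_def by auto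
    then show ?thesis using t r unfolding G'_def by (intro powr_less_mono2) auto
  qed
  show False
  proof (rule strict_contra[OF mono img _ card_x])
    show "finite (x ` {1..n})" by simp
    fix t :: real assume t: "t \<in> {0<..<1}"
    show "\<bar>G' t - f t\<bar> powr r \<le> \<bar>G0 t - f t\<bar> powr r"
      using strict[OF t] unfolding G'_def by (cases "T < t \<and> t < Psum p i") auto
  next
    show "T < Psum p i" "0 \<le> T" "Psum p i \<le> 1" by (fact T T0 P1)+
    fix t :: real assume "t \<in> {T<..<Psum p i}"
    then show "\<bar>G' t - f t\<bar> powr r < \<bar>G0 t - f t\<bar> powr r"
      using strict T0 P1 by auto
  qed
qed

end

lemma sets_Om_iff: "A \<in> sets Om \<longleftrightarrow> A \<subseteq> {0<..<1} \<and> A \<in> sets borel"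
  unfolding Om_def by (subst sets_restrict_space_iff) auto

lemma ind_meas_Om: "S \<in> sets borel \<Longrightarrow> (indicator S :: real \<Rightarrow> real) \<in> borel_measurable Om"
  unfolding Om_def by (rule measurable_restrict_space1) simp

lemma int_ind_Om:
  fixes h :: "real \<Rightarrow> real"
  assumes h: "integrable Om h" and S: "S \<in> sets borel"
  shows "integrable Om (\<lambda>t. indicator S t * h t)"
proof (rule Bochner_Integration.integrable_bound[OF h])
  show "(\<lambda>t. indicator S t * h t) \<in> borel_measurable Om"
    using ind_meas_Om[OF S] borel_measurable_integrable[OF h] by measurable
  show "AE t in Om. norm (indicator S t * h t) \<le> norm (h t)"
    by (auto simp: indicator_def)
qed

context OPT
begin

lemma const_int: "integrable Om (\<lambda>t. \<bar>c - f t\<bar> powr r)"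
  by (rule int_bdd[where B="\<bar>c\<bar>"]) auto

lemma G0_const:
  assumes t: "t \<in> {0<..<1}" and a: "1 \<le> a" and b: "b \<le> n" and ab: "a \<le> b"
    and tt: "Psum p (a - 1) \<le> t" "t < Psum p b"
    and run: "\<And>l. a \<le> l \<Longrightarrow> l \<le> b \<Longrightarrow> x l = v"
  shows "G0 t = v"
proof -
  have "Suc (a - 1) \<le> Lidx p t" using L_ge[OF t tt(1)] a b ab by simp
  moreover have "Lidx p t \<le> b" using L_le[OF t tt(2)] .
  ultimately show ?thesis unfolding Gs_def using run a by auto
qed

lemma core_up:
  assumes i: "1 \<le> i" "i \<le> n" and Pi: "Psum p (i - 1) < Psum p i"
    and w: "x i < w" and H: "\<And>l. i \<le> l \<Longrightarrow> l \<le> n \<Longrightarrow> x l = x i \<or> w \<le> x l"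
    and neg: "integral\<^sup>L Om (\<lambda>t. indicator {Psum p (i - 1)<..<Psum p i} t *
                   (\<bar>w - f t\<bar> powr r - \<bar>x i - f t\<bar> powr r)) < 0"
  shows False
proof -
  define h where "h t = \<bar>w - f t\<bar> powr r - \<bar>x i - f t\<bar> powr r" for t
  define a where "a = Psum p (i - 1)"
  define K where "K = {l\<in>{i..n}. x l = x i}"
  define k where "k = Max K"
  have finK: "finite K" "K \<noteq> {}" unfolding K_def using i by auto
  have kK: "k \<in> K" unfolding k_def using finK by simp
  have ik: "i \<le> k" "k \<le> n" using kK unfolding K_def by auto
  have run: "x l = x i" if "i \<le> l" "l \<le> k" for l
  proof -
    have "x i \<le> x l" using that ik i by (intro Xi_mono[OF x]) auto
    moreover have "x l \<le> x k" using that ik i by (intro Xi_mono[OF x]) auto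
    ultimately show ?thesis using kK unfolding K_def by auto
  qed
  have after: "w \<le> x (Suc k)" if "k < n"
  proof -
    have "Suc k \<notin> K" using finK unfolding k_def by (metis Max_ge Suc_n_not_le_n)
    then show ?thesis using H[of "Suc k"] that ik unfolding K_def by auto
  qed
  have a0: "0 \<le> a" unfolding a_def using Psum_nonneg[OF p] i by simp
  have Pi1: "Psum p i \<le> 1" using Psum_le1[OF p] i by simp
  have Pk: "Psum p i \<le> Psum p k" using Psum_mono[OF p ik] .
  have hint: "integrable Om h" unfolding h_def using const_int by auto
  obtain t0 where t0: "a < t0" "t0 < Psum p i" "h t0 < 0"
  proof (rule ccontr)
    assume "\<not> thesis"
    then have "\<forall>t. a < t \<and> t < Psum p i \<longrightarrow> 0 \<le> h t" using that by force
    then have "0 \<le> integral\<^sup>L Om (\<lambda>t. indicator {a<..<Psum p i} t * h t)"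
      by (intro integral_nonneg_AE AE_I2) (auto simp: indicator_def)
    then show False using neg unfolding h_def a_def by simp
  qed
  have t0in: "t0 \<in> {0<..<1}" using t0 a0 Pi1 by auto
  have hneg: "h t < 0" if t: "t \<in> {0<..<1}" "t0 \<le> t" for t
  proof -
    have "f t0 \<le> f t" using t t0in by (intro q_mono[OF RD]) auto
    then have "h t \<le> h t0" unfolding h_def using w r by (intro g_antimono) auto
    then show ?thesis using t0 by simp
  qed
  define G' where "G' t = (if a \<le> t \<and> t < Psum p k then w else G0 t)" for t
  have mono: "mono_on {0<..<1} G'"
    unfolding G'_def
  proof (rule patch_co[OF G0_mono])
    fix t :: real assume t: "t \<in> {0<..<1}"
    show "t < a \<Longrightarrow> G0 t \<le> w"
      using G0_le[OF t, of i] i w Psum_mono[OF p, of "i - 1" i] unfolding a_def by simp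
    show "Psum p k \<le> t \<Longrightarrow> w \<le> G0 t"
    proof -
      assume tk: "Psum p k \<le> t"
      have "k < n"
      proof (rule ccontr)
        assume "\<not> k < n" then have "k = n" using ik by simp
        then show False using tk t Psum_n[OF p] by simp
      qed
      then show "w \<le> G0 t" using G0_ge[OF t tk] after by force
    qed
  qed
  have img: "G' ` {0<..<1} \<subseteq> insert w (x ` ({1..n} - {i}))"
  proof
    fix v assume "v \<in> G' ` {0<..<1}"
    then obtain t where t: "t \<in> {0<..<1}" "v = G' t" by auto
    show "v \<in> insert w (x ` ({1..n} - {i}))"
    proof (cases "a \<le> t \<and> t < Psum p k")
      case True then show ?thesis using t unfolding G'_def by simp
    next
      case False
      have "Lidx p t \<noteq> i"
      proof
        assume "Lidx p t = i"
        then show False using Lidx_props[OF p, of t] t False Pk unfolding a_def by auto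
      qed
      then show ?thesis using t False Lidx_props[OF p, of t] unfolding G'_def Gs_def by auto
    qed
  qed
  have cardV: "card (insert w (x ` ({1..n} - {i}))) \<le> n"
  proof -
    have "card (insert w (x ` ({1..n} - {i}))) \<le> Suc (card (x ` ({1..n} - {i})))"
      by (simp add: card_insert_le_m1 card_insert_if)
    also have "card (x ` ({1..n} - {i})) \<le> card ({1..n} - {i})" by (rule card_image_le) simp
    also have "card ({1..n} - {i}) = n - 1" using i by simp
    finally show ?thesis using n1 by simp
  qed
  define B where "B = {a<..<Psum p i}"
  define C where "C = {Psum p i..<Psum p k}"
  have pw: "\<bar>G' t - f t\<bar> powr r = \<bar>G0 t - f t\<bar> powr r + indicator B t * h t
           + indicator C t * h t + indicator {a} t * h t" if t: "t \<in> {0<..<1}" for t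
  proof (cases "a \<le> t \<and> t < Psum p k")
    case True
    have "G0 t = x i"
      by (rule G0_const[where a=i and b=k and v="x i", OF t i(1) ik(2) ik(1)])
         (use True in \<open>auto simp: a_def intro: run\<close>)
    moreover have "indicator B t + indicator C t + indicator {a} t = (1::real)"
      using True Pi unfolding B_def C_def a_def by (auto simp: indicator_def)
    moreover have "indicator B t * h t + indicator C t * h t + indicator {a} t * h t
        = (indicator B t + indicator C t + indicator {a} t) * h t"
      by (simp add: distrib_right)
    ultimately have "indicator B t * h t + indicator C t * h t + indicator {a} t * h t = h t" by simp
    moreover have "G' t = w" using True unfolding G'_def by simp
    ultimately show ?thesis using \<open>G0 t = x i\<close> unfolding h_def by simp
  next
    case False
    then have "indicator B t = (0::real)" "indicator C t = (0::real)" "indicator {a} t = (0::real)"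
      using Pk Pi unfolding B_def C_def a_def by (auto simp: indicator_def)
    moreover have "G' t = G0 t" using False unfolding G'_def by auto
    ultimately show ?thesis by simp
  qed
  have iB: "integrable Om (\<lambda>t. indicator B t * h t)" unfolding B_def by (rule int_ind_Om[OF hint]) simp
  have iC: "integrable Om (\<lambda>t. indicator C t * h t)" unfolding C_def by (rule int_ind_Om[OF hint]) simp
  have ia: "integrable Om (\<lambda>t. indicator {a} t * h t)" by (rule int_ind_Om[OF hint]) simp
  have "cost G' = cost G0 + integral\<^sup>L Om (\<lambda>t. indicator B t * h t)
       + integral\<^sup>L Om (\<lambda>t. indicator C t * h t) + integral\<^sup>L Om (\<lambda>t. indicator {a} t * h t)"
  proof -
    have "cost G' = integral\<^sup>L Om (\<lambda>t. \<bar>G0 t - f t\<bar> powr r + indicator B t * h t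
           + indicator C t * h t + indicator {a} t * h t)"
      unfolding cost_def by (rule Bochner_Integration.integral_cong) (auto simp: pw)
    also have "\<dots> = cost G0 + integral\<^sup>L Om (\<lambda>t. indicator B t * h t)
       + integral\<^sup>L Om (\<lambda>t. indicator C t * h t) + integral\<^sup>L Om (\<lambda>t. indicator {a} t * h t)"
      unfolding cost_def using G0_int iB iC ia by simp
    finally show ?thesis .
  qed
  moreover have "integral\<^sup>L Om (\<lambda>t. indicator B t * h t) < 0"
    using neg unfolding B_def h_def a_def by simp
  moreover have "integral\<^sup>L Om (\<lambda>t. indicator C t * h t) \<le> 0"
  proof -
    have "0 \<le> integral\<^sup>L Om (\<lambda>t. - (indicator C t * h t))"
    proof (rule integral_nonneg_AE, rule AE_I2)
      fix t assume t: "t \<in> space Om"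
      show "0 \<le> - (indicator C t * h t)"
      proof (cases "t \<in> C")
        case True
        then have "t0 \<le> t" using t0 unfolding C_def by auto
        then show ?thesis using hneg[of t] t True by simp
      qed simp
    qed
    then show ?thesis by simp
  qed
  moreover have "integral\<^sup>L Om (\<lambda>t. indicator {a} t * h t) = 0"
    by (rule integral_eq_zero_AE) (use AE_Om_finite[of "{a}"] in \<open>auto elim: AE_mp\<close>)
  ultimately have less: "cost G' < cost G0" by simp
  have finV: "finite (insert w (x ` ({1..n} - {i})))" by simp
  show False by (rule better_false[OF mono img finV cardV less])
qed

end

context OPT
begin

lemma core_down:
  assumes i: "1 \<le> i" "i \<le> n" and Pi: "Psum p (i - 1) < Psum p i"
    and w: "w < x i" and H: "\<And>l. 1 \<le> l \<Longrightarrow> l \<le> i \<Longrightarrow> x l = x i \<or> x l \<le> w"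
    and neg: "integral\<^sup>L Om (\<lambda>t. indicator {Psum p (i - 1)<..<Psum p i} t *
                   (\<bar>w - f t\<bar> powr r - \<bar>x i - f t\<bar> powr r)) < 0"
  shows False
proof -
  define h where "h t = \<bar>w - f t\<bar> powr r - \<bar>x i - f t\<bar> powr r" for t
  define a where "a = Psum p (i - 1)"
  define K where "K = {l\<in>{1..i}. x l = x i}"
  define j where "j = Min K"
  have finK: "finite K" "K \<noteq> {}" unfolding K_def using i by auto
  have jK: "j \<in> K" unfolding j_def using finK by simp
  have ij: "1 \<le> j" "j \<le> i" using jK unfolding K_def by auto
  have run: "x l = x i" if "j \<le> l" "l \<le> i" for l
  proof -
    have "x j \<le> x l" using that ij i by (intro Xi_mono[OF x]) auto
    moreover have "x l \<le> x i" using that ij i by (intro Xi_mono[OF x]) auto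
    ultimately show ?thesis using jK unfolding K_def by auto
  qed
  have before: "x (j - 1) \<le> w" if "1 < j"
  proof -
    have "j - 1 \<notin> K" using finK that unfolding j_def by (metis Min_le diff_less less_numeral_extra(1) linorder_not_le order_less_trans zero_less_one)
    then show ?thesis using H[of "j - 1"] that ij unfolding K_def by auto
  qed
  have a0: "0 \<le> a" unfolding a_def using Psum_nonneg[OF p] i by simp
  have Pi1: "Psum p i \<le> 1" using Psum_le1[OF p] i by simp
  have Pj: "Psum p (j - 1) \<le> a" unfolding a_def using Psum_mono[OF p, of "j - 1" "i - 1"] ij i by simp
  have hint: "integrable Om h" unfolding h_def using const_int by auto
  obtain t0 where t0: "a < t0" "t0 < Psum p i" "h t0 < 0"
  proof (rule ccontr)
    assume "\<not> thesis"
    then have "\<forall>t. a < t \<and> t < Psum p i \<longrightarrow> 0 \<le> h t" using that by force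
    then have "0 \<le> integral\<^sup>L Om (\<lambda>t. indicator {a<..<Psum p i} t * h t)"
      by (intro integral_nonneg_AE AE_I2) (auto simp: indicator_def)
    then show False using neg unfolding h_def a_def by simp
  qed
  have t0in: "t0 \<in> {0<..<1}" using t0 a0 Pi1 by auto
  have hneg: "h t < 0" if t: "t \<in> {0<..<1}" "t \<le> t0" for t
  proof -
    have "f t \<le> f t0" using t t0in by (intro q_mono[OF RD]) auto
    then have "h t \<le> h t0" unfolding h_def using w r by (intro g_mono) auto
    then show ?thesis using t0 by simp
  qed
  define G' where "G' t = (if Psum p (j - 1) \<le> t \<and> t < Psum p i then w else G0 t)" for t
  have mono: "mono_on {0<..<1} G'"
    unfolding G'_def
  proof (rule patch_co[OF G0_mono])
    fix t :: real assume t: "t \<in> {0<..<1}"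
    show "t < Psum p (j - 1) \<Longrightarrow> G0 t \<le> w"
    proof -
      assume tj: "t < Psum p (j - 1)"
      have "1 < j"
      proof (rule ccontr)
        assume "\<not> 1 < j" then have "j = 1" using ij by simp
        then show False using tj t by simp
      qed
      then show "G0 t \<le> w" using G0_le[OF t tj] before ij i by force
    qed
    show "Psum p i \<le> t \<Longrightarrow> w \<le> G0 t"
    proof -
      assume ti: "Psum p i \<le> t"
      have "i < n"
      proof (rule ccontr)
        assume "\<not> i < n" then have "i = n" using i by simp
        then show False using ti t Psum_n[OF p] by simp
      qed
      then have "x (Suc i) \<le> G0 t" using G0_ge[OF t ti] by simp
      moreover have "x i \<le> x (Suc i)" using x i \<open>i < n\<close> unfolding Xi_def by simp
      ultimately show "w \<le> G0 t" using w by simp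
    qed
  qed
  have img: "G' ` {0<..<1} \<subseteq> insert w (x ` ({1..n} - {i}))"
  proof
    fix v assume "v \<in> G' ` {0<..<1}"
    then obtain t where t: "t \<in> {0<..<1}" "v = G' t" by auto
    show "v \<in> insert w (x ` ({1..n} - {i}))"
    proof (cases "Psum p (j - 1) \<le> t \<and> t < Psum p i")
      case True then show ?thesis using t unfolding G'_def by simp
    next
      case False
      have "Lidx p t \<noteq> i"
      proof
        assume "Lidx p t = i"
        then show False using Lidx_props[OF p, of t] t False Pj unfolding a_def by auto
      qed
      then show ?thesis using t False Lidx_props[OF p, of t] unfolding G'_def Gs_def by auto
    qed
  qed
  have cardV: "card (insert w (x ` ({1..n} - {i}))) \<le> n"
  proof -
    have "card (insert w (x ` ({1..n} - {i}))) \<le> Suc (card (x ` ({1..n} - {i})))"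
      by (simp add: card_insert_le_m1 card_insert_if)
    also have "card (x ` ({1..n} - {i})) \<le> card ({1..n} - {i})" by (rule card_image_le) simp
    also have "card ({1..n} - {i}) = n - 1" using i by simp
    finally show ?thesis using n1 by simp
  qed
  define B where "B = {a<..<Psum p i}"
  define C where "C = {Psum p (j - 1)..a}"
  have pw: "\<bar>G' t - f t\<bar> powr r = \<bar>G0 t - f t\<bar> powr r + indicator B t * h t
           + indicator C t * h t" if t: "t \<in> {0<..<1}" for t
  proof (cases "Psum p (j - 1) \<le> t \<and> t < Psum p i")
    case True
    have "G0 t = x i"
      by (rule G0_const[where a=j and b=i and v="x i", OF t ij(1) i(2) ij(2)])
         (use True in \<open>auto intro: run\<close>)
    moreover have "indicator B t + indicator C t = (1::real)"
      using True Pi unfolding B_def C_def a_def by (auto simp: indicator_def)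
    moreover have "indicator B t * h t + indicator C t * h t
        = (indicator B t + indicator C t) * h t"
      by (simp add: distrib_right)
    ultimately have "indicator B t * h t + indicator C t * h t = h t" by simp
    moreover have "G' t = w" using True unfolding G'_def by simp
    ultimately show ?thesis using \<open>G0 t = x i\<close> unfolding h_def by simp
  next
    case False
    then have "indicator B t = (0::real)" "indicator C t = (0::real)"
      using Pj Pi unfolding B_def C_def a_def by (auto simp: indicator_def)
    moreover have "G' t = G0 t" using False unfolding G'_def by auto
    ultimately show ?thesis by simp
  qed
  have iB: "integrable Om (\<lambda>t. indicator B t * h t)" unfolding B_def by (rule int_ind_Om[OF hint]) simp
  have iC: "integrable Om (\<lambda>t. indicator C t * h t)" unfolding C_def by (rule int_ind_Om[OF hint]) simp
  have "cost G' = cost G0 + integral\<^sup>L Om (\<lambda>t. indicator B t * h t)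
       + integral\<^sup>L Om (\<lambda>t. indicator C t * h t)"
  proof -
    have "cost G' = integral\<^sup>L Om (\<lambda>t. \<bar>G0 t - f t\<bar> powr r + indicator B t * h t
           + indicator C t * h t)"
      unfolding cost_def by (rule Bochner_Integration.integral_cong) (auto simp: pw)
    also have "\<dots> = cost G0 + integral\<^sup>L Om (\<lambda>t. indicator B t * h t)
       + integral\<^sup>L Om (\<lambda>t. indicator C t * h t)"
      unfolding cost_def using G0_int iB iC by simp
    finally show ?thesis .
  qed
  moreover have "integral\<^sup>L Om (\<lambda>t. indicator B t * h t) < 0"
    using neg unfolding B_def h_def a_def by simp
  moreover have "integral\<^sup>L Om (\<lambda>t. indicator C t * h t) \<le> 0"
  proof -
    have "0 \<le> integral\<^sup>L Om (\<lambda>t. - (indicator C t * h t))"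
    proof (rule integral_nonneg_AE, rule AE_I2)
      fix t assume t: "t \<in> space Om"
      show "0 \<le> - (indicator C t * h t)"
      proof (cases "t \<in> C")
        case True
        then have "t \<le> t0" using t0 unfolding C_def by auto
        then show ?thesis using hneg[of t] t True by simp
      qed simp
    qed
    then show ?thesis by simp
  qed
  ultimately have less: "cost G' < cost G0" by simp
  have finV: "finite (insert w (x ` ({1..n} - {i})))" by simp
  show False by (rule better_false[OF mono img finV cardV less])
qed

end

lemma int_ind_interval_Om:
  assumes uv: "0 \<le> u" "u \<le> v" "v \<le> 1" and S: "{u<..<v} \<subseteq> S" "S \<subseteq> {u..v}" "S \<in> sets borel"
  shows "integral\<^sup>L Om (\<lambda>t. indicator S t * c) = c * (v - u)"
proof -
  have sub: "{u<..<v} \<subseteq> {0<..<1}" using uv by auto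
  have "integral\<^sup>L Om (\<lambda>t. indicator S t * c) = integral\<^sup>L Om (\<lambda>t. indicator {u<..<v} t * c)"
  proof (rule integral_cong_AE)
    show "(\<lambda>t. indicator S t * c) \<in> borel_measurable Om" using ind_meas_Om[OF S(3)] by measurable
    show "(\<lambda>t. indicator {u<..<v} t * c) \<in> borel_measurable Om" using ind_meas_Om[of "{u<..<v}"] by measurable
    show "AE t in Om. indicator S t * c = indicator {u<..<v} t * c"
      using AE_Om_finite[of "{u, v}"] by (rule AE_mp) (use S in \<open>auto intro!: AE_I2 simp: indicator_def\<close>)
  qed
  also have "\<dots> = integral\<^sup>L Om (indicator {u<..<v}) * c"
    by (rule integral_mult_left_zero)
  also have "integral\<^sup>L Om (indicator {u<..<v}) = measure Om {u<..<v}"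
  proof -
    have "{u<..<v} \<inter> space Om = {u<..<v}" using sub by auto
    then show ?thesis using Bochner_Integration.integral_indicator[of Om "{u<..<v}"] by metis
  qed
  also have "measure Om {u<..<v} = v - u"
    using sub uv unfolding measure_def by (simp add: emeasure_Om)
  finally show ?thesis by simp
qed

lemma powr_inv_le_iff:
  fixes a b r :: real
  assumes "0 \<le> a" "0 \<le> b" "r > 0"
  shows "a powr (1 / r) \<le> b powr (1 / r) \<longleftrightarrow> a \<le> b"
proof
  assume "a \<le> b" then show "a powr (1 / r) \<le> b powr (1 / r)" using assms by (intro powr_mono2) auto
next
  assume le: "a powr (1 / r) \<le> b powr (1 / r)"
  have "a = (a powr (1 / r)) powr r" using assms by (simp add: powr_powr)
  also have "\<dots> \<le> (b powr (1 / r)) powr r" by (rule powr_mono2) (use le assms in auto)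
  also have "\<dots> = b" using assms by (simp add: powr_powr)
  finally show "a \<le> b" .
qed

context OPT
begin

lemma pick_up:
  assumes "x i < s" and i: "1 \<le> i" "i \<le> n"
  shows "\<exists>w. x i < w \<and> w \<le> s \<and> (\<forall>l. i \<le> l \<longrightarrow> l \<le> n \<longrightarrow> x l = x i \<or> w \<le> x l)"
proof -
  define U where "U = x ` {l\<in>{i..n}. x i < x l}"
  have finU: "finite U" unfolding U_def by simp
  define w where "w = (if U = {} then s else min s (Min U))"
  have "x i < w" unfolding w_def using assms finU by (auto simp: U_def)
  moreover have "w \<le> s" unfolding w_def by auto
  moreover have "\<forall>l. i \<le> l \<longrightarrow> l \<le> n \<longrightarrow> x l = x i \<or> w \<le> x l"
  proof (intro allI impI)
    fix l assume l: "i \<le> l" "l \<le> n"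
    show "x l = x i \<or> w \<le> x l"
    proof (cases "x i < x l")
      case True
      then have "x l \<in> U" unfolding U_def using l by auto
      then have "Min U \<le> x l" using finU by simp
      then show ?thesis unfolding w_def using \<open>x l \<in> U\<close> by auto
    next
      case False
      then show ?thesis using l i Xi_mono[OF x, of i l] by auto
    qed
  qed
  ultimately show ?thesis by blast
qed

lemma pick_down:
  assumes "s < x i" and i: "1 \<le> i" "i \<le> n"
  shows "\<exists>w. w < x i \<and> s \<le> w \<and> (\<forall>l. 1 \<le> l \<longrightarrow> l \<le> i \<longrightarrow> x l = x i \<or> x l \<le> w)"
proof -
  define D where "D = x ` {l\<in>{1..i}. x l < x i}"
  have finD: "finite D" unfolding D_def by simp
  define w where "w = (if D = {} then s else max s (Max D))"
  have "w < x i" unfolding w_def using assms finD by (auto simp: D_def)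
  moreover have "s \<le> w" unfolding w_def by auto
  moreover have "\<forall>l. 1 \<le> l \<longrightarrow> l \<le> i \<longrightarrow> x l = x i \<or> x l \<le> w"
  proof (intro allI impI)
    fix l assume l: "1 \<le> l" "l \<le> i"
    show "x l = x i \<or> x l \<le> w"
    proof (cases "x l < x i")
      case True
      then have "x l \<in> D" unfolding D_def using l by auto
      then have "x l \<le> Max D" using finD by simp
      then show ?thesis unfolding w_def using \<open>x l \<in> D\<close> by auto
    next
      case False
      then show ?thesis using l i Xi_mono[OF x, of l i] by auto
    qed
  qed
  ultimately show ?thesis by blast
qed

end

context OPT
begin

lemma part_ii_1:
  assumes r1: "r = 1" and i: "1 \<le> i" "i \<le> n" and Pi: "Psum p (i - 1) < Psum p i"
  shows "x i \<in> Qset M ((Psum p (i - 1) + Psum p i) / 2)"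
proof -
  interpret real_distribution M by (rule RD)
  interpret O: prob_space Om by (rule prob_space_Om)
  define a where "a = Psum p (i - 1)"
  define b where "b = Psum p i"
  define s where "s = (a + b) / 2"
  have a0: "0 \<le> a" unfolding a_def using Psum_nonneg[OF p] i by simp
  have b1: "b \<le> 1" unfolding b_def using Psum_le1[OF p] i by simp
  have ab: "a < b" using Pi unfolding a_def b_def .
  have s: "a < s" "s < b" "0 < s" "s < 1" unfolding s_def using ab a0 b1 by auto
  have pw1: "\<And>z::real. \<bar>z\<bar> powr r = \<bar>z\<bar>" using r1 by simp
  define D where "D w t = \<bar>w - f t\<bar> - \<bar>x i - f t\<bar>" for w t
  have Dint: "integrable Om (\<lambda>t. indicator {a<..<b} t * D w t)" for w
  proof -
    have "integrable Om (D w)" unfolding D_def using const_int[of w] const_int[of "x i"] pw1 by simp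
    then show ?thesis by (rule int_ind_Om) simp
  qed
  have cint: "integrable Om (\<lambda>t. indicator S t * c)" if "S \<in> sets borel" for S and c :: real
    using int_ind_Om[of "\<lambda>_. c" S] that by simp
  have Dle: "D w t \<le> \<bar>w - x i\<bar>" for w t unfolding D_def by linarith
  have upper: "x i \<le> quantile M s"
  proof (rule ccontr)
    assume "\<not> x i \<le> quantile M s"
    then have lt: "quantile M s < x i" by simp
    obtain w where w: "w < x i" "(quantile M s + x i) / 2 \<le> w"
      and H: "\<forall>l. 1 \<le> l \<longrightarrow> l \<le> i \<longrightarrow> x l = x i \<or> x l \<le> w"
      using pick_down[of "(quantile M s + x i) / 2" i] lt i by auto
    define e where "e = x i - w"
    have e: "0 < e" unfolding e_def using w by simp
    have cw: "s < cdf M w" using q_gt_imp[OF RD s(4), of w] w lt by simp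
    define c where "c = min (cdf M w) b"
    have c: "s < c" "c \<le> b" unfolding c_def using cw s by auto
    have pw: "indicator {a<..<b} t * D w t \<le> indicator {a<..<c} t * (- e) + indicator {c..<b} t * e"
      if t: "t \<in> space Om" for t
    proof (cases "t \<in> {a<..<b}")
      case True
      show ?thesis
      proof (cases "t < c")
        case True
        then have "t < cdf M w" unfolding c_def by simp
        then have "f t \<le> w" using q_le[OF RD, of t w] t by simp
        then have "D w t = - e" unfolding D_def e_def using w by simp
        then show ?thesis using True \<open>t \<in> {a<..<b}\<close> by simp
      next
        case False
        then show ?thesis using True Dle[of w t] unfolding e_def using w by (simp add: indicator_def)
      qed
    next
      case False
      then show ?thesis using c s by (auto simp: indicator_def)
    qed
    have "integral\<^sup>L Om (\<lambda>t. indicator {a<..<b} t * D w t)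
        \<le> integral\<^sup>L Om (\<lambda>t. indicator {a<..<c} t * (- e) + indicator {c..<b} t * e)"
      by (intro integral_mono_AE Dint AE_I2 pw Bochner_Integration.integrable_add cint) auto
    also have "\<dots> = integral\<^sup>L Om (\<lambda>t. indicator {a<..<c} t * (- e)) + integral\<^sup>L Om (\<lambda>t. indicator {c..<b} t * e)"
      by (intro Bochner_Integration.integral_add cint) auto
    also have "\<dots> = (- e) * (c - a) + e * (b - c)"
    proof -
      have "integral\<^sup>L Om (\<lambda>t. indicator {a<..<c} t * (- e)) = (- e) * (c - a)"
        by (rule int_ind_interval_Om) (use a0 c s b1 in auto)
      moreover have "integral\<^sup>L Om (\<lambda>t. indicator {c..<b} t * e) = e * (b - c)"
        by (rule int_ind_interval_Om) (use a0 c s b1 in auto)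
      ultimately show ?thesis by linarith
    qed
    also have "\<dots> = e * ((a + b) - 2 * c)" by (simp add: algebra_simps)
    also have "\<dots> < 0" using e c unfolding s_def by (intro mult_pos_neg) auto
    finally have neg: "integral\<^sup>L Om (\<lambda>t. indicator {a<..<b} t * D w t) < 0" .
    show False
    proof (rule core_down[OF i Pi w(1)])
      show "\<And>l. 1 \<le> l \<Longrightarrow> l \<le> i \<Longrightarrow> x l = x i \<or> x l \<le> w" using H by blast
      show "integral\<^sup>L Om (\<lambda>t. indicator {Psum p (i - 1)<..<Psum p i} t *
                   (\<bar>w - f t\<bar> powr r - \<bar>x i - f t\<bar> powr r)) < 0"
        using neg unfolding a_def b_def D_def pw1 .
    qed
  qed
  define S where "S = {z. s \<le> cdf M z}"
  have Sne: "S \<noteq> {}"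
  proof -
    obtain z where "s < cdf M z"
      using order_tendstoD(1)[OF cdf_lim_at_top_prob s(4)]
      by (metis eventually_at_top_linorder order_refl)
    then show ?thesis unfolding S_def by (auto intro!: exI[of _ z])
  qed
  have Sbdd: "bdd_below S"
  proof -
    obtain a1 where a1: "cdf M a1 < s"
      using order_tendstoD(2)[OF cdf_lim_at_bot s(3)]
      by (metis eventually_at_bot_linorder order_refl)
    show ?thesis
    proof (rule bdd_belowI[of _ a1])
      fix z assume "z \<in> S"
      then show "a1 \<le> z" using a1 cdf_nondecreasing[of z a1] unfolding S_def by force
    qed
  qed
  have lower: "Inf S \<le> x i"
  proof (rule ccontr)
    assume "\<not> Inf S \<le> x i"
    then have lt: "x i < Inf S" by simp
    obtain w where w: "x i < w" "w \<le> (x i + Inf S) / 2"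
      and H: "\<forall>l. i \<le> l \<longrightarrow> l \<le> n \<longrightarrow> x l = x i \<or> w \<le> x l"
      using pick_up[of i "(x i + Inf S) / 2"] lt i by auto
    define e where "e = w - x i"
    have e: "0 < e" unfolding e_def using w by simp
    have cw: "cdf M w < s"
    proof (rule ccontr)
      assume "\<not> cdf M w < s"
      then have "w \<in> S" unfolding S_def by simp
      then have "Inf S \<le> w" by (rule cInf_lower[OF _ Sbdd])
      then show False using w lt by simp
    qed
    define c where "c = max (cdf M w) a"
    have c: "c < s" "a \<le> c" unfolding c_def using cw s by auto
    have pw: "indicator {a<..<b} t * D w t \<le> indicator {a<..c} t * e + indicator {c<..<b} t * (- e)"
      if t: "t \<in> space Om" for t
    proof (cases "t \<in> {a<..<b}")
      case True
      show ?thesis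
      proof (cases "c < t")
        case True
        then have "cdf M w \<le> t" unfolding c_def by simp
        then have "w \<le> f t" using q_ge[OF RD, of t w] t by simp
        then have "D w t = - e" unfolding D_def e_def using w by simp
        then show ?thesis using True \<open>t \<in> {a<..<b}\<close> by simp
      next
        case False
        then show ?thesis using True Dle[of w t] unfolding e_def using w by (simp add: indicator_def)
      qed
    next
      case False
      then show ?thesis using c s by (auto simp: indicator_def)
    qed
    have "integral\<^sup>L Om (\<lambda>t. indicator {a<..<b} t * D w t)
        \<le> integral\<^sup>L Om (\<lambda>t. indicator {a<..c} t * e + indicator {c<..<b} t * (- e))"
      by (intro integral_mono_AE Dint AE_I2 pw Bochner_Integration.integrable_add cint) auto
    also have "\<dots> = integral\<^sup>L Om (\<lambda>t. indicator {a<..c} t * e) + integral\<^sup>L Om (\<lambda>t. indicator {c<..<b} t * (- e))"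
      by (intro Bochner_Integration.integral_add cint) auto
    also have "\<dots> = e * (c - a) + (- e) * (b - c)"
    proof -
      have "integral\<^sup>L Om (\<lambda>t. indicator {a<..c} t * e) = e * (c - a)"
        by (rule int_ind_interval_Om) (use a0 c s b1 in auto)
      moreover have "integral\<^sup>L Om (\<lambda>t. indicator {c<..<b} t * (- e)) = (- e) * (b - c)"
        by (rule int_ind_interval_Om) (use a0 c s b1 in auto)
      ultimately show ?thesis by linarith
    qed
    also have "\<dots> = e * (2 * c - (a + b))" by (simp add: algebra_simps)
    also have "\<dots> < 0" using e c unfolding s_def by (intro mult_pos_neg) auto
    finally have neg: "integral\<^sup>L Om (\<lambda>t. indicator {a<..<b} t * D w t) < 0" .
    show False
    proof (rule core_up[OF i Pi w(1)])
      show "\<And>l. i \<le> l \<Longrightarrow> l \<le> n \<Longrightarrow> x l = x i \<or> w \<le> x l" using H by blast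
      show "integral\<^sup>L Om (\<lambda>t. indicator {Psum p (i - 1)<..<Psum p i} t *
                   (\<bar>w - f t\<bar> powr r - \<bar>x i - f t\<bar> powr r)) < 0"
        using neg unfolding a_def b_def D_def pw1 .
    qed
  qed
  show ?thesis
    using upper lower unfolding Qset_def S_def quantile_def s_def a_def b_def by simp
qed

end

lemma LINT_closed_Om:
  fixes g :: "real \<Rightarrow> real"
  assumes ab: "0 \<le> a" "a < b" "b \<le> 1"
    and int: "integrable Om (\<lambda>t. indicator {a<..<b} t * g t)"
  shows "(LINT u:{a..b}|lborel. g u) = integral\<^sup>L Om (\<lambda>t. indicator {a<..<b} t * g t)"
proof -
  have sub: "{a<..<b} \<subseteq> {0<..<1}" using ab by auto
  have eq1: "indicator {0<..<1} t *\<^sub>R (indicator {a<..<b} t * g t) = indicator {a<..<b} t * g t" for t :: real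
    using sub by (auto simp: indicator_def)
  have eq1': "(\<lambda>t. indicator {0<..<1} t * (indicator {a<..<b} t * g t)) = (\<lambda>t. indicator {a<..<b} t * g t)"
    by (rule ext) (use sub in \<open>auto simp: indicator_def\<close>)
  have "integrable lborel (\<lambda>t. indicator {0<..<1} t * (indicator {a<..<b} t * g t))"
    using int unfolding Om_def by (subst (asm) integrable_restrict_space) auto
  then have intL: "integrable lborel (\<lambda>t. indicator {a<..<b} t * g t)"
    by (simp only: eq1')
  have intEq: "integral\<^sup>L Om (\<lambda>t. indicator {a<..<b} t * g t) = integral\<^sup>L lborel (\<lambda>t. indicator {a<..<b} t * g t)"
    unfolding Om_def by (subst integral_restrict_space) (simp, simp only: eq1' scaleR_conv_of_real of_real_eq_id id_apply)
  have pw: "indicator {a..b} u *\<^sub>R g u = indicator {a<..<b} u * g u + indicator {a} u * g a + indicator {b} u * g b" for u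
    using ab by (auto simp: indicator_def)
  have measL: "(\<lambda>t. indicator {a<..<b} t * g t) \<in> borel_measurable lborel"
    using borel_measurable_integrable[OF intL] .
  have "(LINT u:{a..b}|lborel. g u) = integral\<^sup>L lborel (\<lambda>u. indicator {a..b} u *\<^sub>R g u)"
    by (simp add: set_lebesgue_integral_def)
  also have "\<dots> = integral\<^sup>L lborel (\<lambda>t. indicator {a<..<b} t * g t)"
  proof (rule integral_cong_AE)
    show "(\<lambda>u. indicator {a..b} u *\<^sub>R g u) \<in> borel_measurable lborel"
      unfolding pw using measL by measurable
    show "(\<lambda>t. indicator {a<..<b} t * g t) \<in> borel_measurable lborel" by (rule measL)
    have "AE u in lborel. u \<notin> {a, b}"
      by (rule AE_not_in[OF finite_imp_null_set_lborel]) simp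
    show "AE u in lborel. indicator {a..b} u *\<^sub>R g u = indicator {a<..<b} u * g u"
      using \<open>AE u in lborel. u \<notin> {a, b}\<close> by (rule AE_mp) (auto intro!: AE_I2 simp: indicator_def)
  qed
  finally show ?thesis using intEq by simp
qed

context OPT
begin

lemma part_ii_gt:
  assumes r1: "r > 1" and i: "1 \<le> i" "i \<le> n" and Pi: "Psum p (i - 1) < Psum p i"
  shows "x i = tau r (Psum p (i - 1)) (Psum p i) (quantile M)"
proof -
  interpret O: prob_space Om by (rule prob_space_Om)
  define a where "a = Psum p (i - 1)"
  define b where "b = Psum p i"
  have a0: "0 \<le> a" unfolding a_def using Psum_nonneg[OF p] i by simp
  have b1: "b \<le> 1" unfolding b_def using Psum_le1[OF p] i by simp
  have ab: "a < b" using Pi unfolding a_def b_def .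
  define phi where "phi c = integral\<^sup>L Om (\<lambda>t. indicator {a<..<b} t * \<bar>c - f t\<bar> powr r)" for c
  have pint: "integrable Om (\<lambda>t. indicator {a<..<b} t * \<bar>c - f t\<bar> powr r)" for c
    by (rule int_ind_Om[OF const_int]) simp
  have pnn: "0 \<le> phi c" for c unfolding phi_def by (intro integral_nonneg_AE AE_I2) auto
  have norm: "Lr_norm_J r a b (\<lambda>u. f u - c) = phi c powr (1 / r)" for c
  proof -
    have "(LINT u:{a..b}|lborel. \<bar>f u - c\<bar> powr r) = phi c"
      unfolding phi_def
      by (subst LINT_closed_Om[OF a0 ab b1]) (use pint[of c] in \<open>auto simp: abs_minus_commute\<close>)
    then show ?thesis unfolding Lr_norm_J_def by simp
  qed
  have convex: "phi (l * u + (1 - l) * v) \<le> l * phi u + (1 - l) * phi v"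
    if l: "0 \<le> l" "l \<le> 1" for l u v
  proof -
    have "phi (l * u + (1 - l) * v)
        \<le> integral\<^sup>L Om (\<lambda>t. l * (indicator {a<..<b} t * \<bar>u - f t\<bar> powr r)
                          + (1 - l) * (indicator {a<..<b} t * \<bar>v - f t\<bar> powr r))"
      unfolding phi_def
    proof (intro integral_mono_AE pint AE_I2 Bochner_Integration.integrable_add integrable_mult_right)
      fix t
      have "\<bar>l * (u - f t) + (1 - l) * (v - f t)\<bar> powr r \<le> l * \<bar>u - f t\<bar> powr r + (1 - l) * \<bar>v - f t\<bar> powr r"
        by (rule convex_abs_powr[OF r l])
      moreover have "l * (u - f t) + (1 - l) * (v - f t) = l * u + (1 - l) * v - f t"
        by (simp add: algebra_simps)
      ultimately show "indicator {a<..<b} t * \<bar>l * u + (1 - l) * v - f t\<bar> powr r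
          \<le> l * (indicator {a<..<b} t * \<bar>u - f t\<bar> powr r) + (1 - l) * (indicator {a<..<b} t * \<bar>v - f t\<bar> powr r)"
        by (auto simp: indicator_def)
    qed
    also have "\<dots> = l * phi u + (1 - l) * phi v"
      unfolding phi_def using pint by simp
    finally show ?thesis .
  qed
  have diffneg: "integral\<^sup>L Om (\<lambda>t. indicator {a<..<b} t * (\<bar>w - f t\<bar> powr r - \<bar>x i - f t\<bar> powr r)) < 0"
    if "phi w < phi (x i)" for w
  proof -
    have "integral\<^sup>L Om (\<lambda>t. indicator {a<..<b} t * (\<bar>w - f t\<bar> powr r - \<bar>x i - f t\<bar> powr r))
        = phi w - phi (x i)"
      unfolding phi_def using pint by (simp add: right_diff_distrib)
    then show ?thesis using that by simp
  qed
  have min: "phi (x i) \<le> phi s" for s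
  proof (rule ccontr)
    assume "\<not> phi (x i) \<le> phi s"
    then have lt: "phi s < phi (x i)" by simp
    have "s \<noteq> x i" using lt by auto
    then consider "x i < s" | "s < x i" by linarith
    then show False
    proof cases
      case 1
      obtain w where w: "x i < w" "w \<le> s" and H: "\<forall>l. i \<le> l \<longrightarrow> l \<le> n \<longrightarrow> x l = x i \<or> w \<le> x l"
        using pick_up[OF 1 i] by blast
      define l where "l = (s - w) / (s - x i)"
      have l: "0 \<le> l" "l < 1" unfolding l_def using w 1 by (auto simp: divide_simps)
      have e: "l * (s - x i) = s - w" unfolding l_def using 1 by simp
      have "l * x i + (1 - l) * s = s - l * (s - x i)" by (simp add: algebra_simps)
      then have wl: "w = l * x i + (1 - l) * s" using e by simp
      have "phi w \<le> l * phi (x i) + (1 - l) * phi s" unfolding wl by (rule convex) (use l in auto)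
      also have "\<dots> < phi (x i)"
      proof -
        have "(1 - l) * phi s < (1 - l) * phi (x i)" using l lt by (intro mult_strict_left_mono) auto
        then show ?thesis by (simp add: algebra_simps)
      qed
      finally have "phi w < phi (x i)" .
      show False
        by (rule core_up[OF i Pi w(1)]) (use H diffneg[OF \<open>phi w < phi (x i)\<close>] in \<open>auto simp: a_def b_def\<close>)
    next
      case 2
      obtain w where w: "w < x i" "s \<le> w" and H: "\<forall>l. 1 \<le> l \<longrightarrow> l \<le> i \<longrightarrow> x l = x i \<or> x l \<le> w"
        using pick_down[OF 2 i] by blast
      define l where "l = (w - s) / (x i - s)"
      have l: "0 \<le> l" "l < 1" unfolding l_def using w 2 by (auto simp: divide_simps)
      have e: "l * (x i - s) = w - s" unfolding l_def using 2 by simp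
      have "l * x i + (1 - l) * s = s + l * (x i - s)" by (simp add: algebra_simps)
      then have wl: "w = l * x i + (1 - l) * s" using e by simp
      have "phi w \<le> l * phi (x i) + (1 - l) * phi s" unfolding wl by (rule convex) (use l in auto)
      also have "\<dots> < phi (x i)"
      proof -
        have "(1 - l) * phi s < (1 - l) * phi (x i)" using l lt by (intro mult_strict_left_mono) auto
        then show ?thesis by (simp add: algebra_simps)
      qed
      finally have "phi w < phi (x i)" .
      show False
        by (rule core_down[OF i Pi w(1)]) (use H diffneg[OF \<open>phi w < phi (x i)\<close>] in \<open>auto simp: a_def b_def\<close>)
    qed
  qed
  have uniq: "t = x i" if "\<forall>s. Lr_norm_J r a b (\<lambda>u. f u - t) \<le> Lr_norm_J r a b (\<lambda>u. f u - s)" for t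
  proof (rule ccontr)
    assume ne: "t \<noteq> x i"
    have "phi t \<le> phi (x i)" using that[rule_format, of "x i"] unfolding norm
      using powr_inv_le_iff[OF pnn pnn, of r] r1 by simp
    define m where "m = (t + x i) / 2"
    have "phi m < (phi t + phi (x i)) / 2"
    proof -
      have "phi m < integral\<^sup>L Om (\<lambda>t'. (indicator {a<..<b} t' * \<bar>t - f t'\<bar> powr r
                                          + indicator {a<..<b} t' * \<bar>x i - f t'\<bar> powr r) / 2)"
        unfolding phi_def
      proof (rule O.integral_less_AE[where A="{a<..<b}"])
        show "integrable Om (\<lambda>t'. indicator {a<..<b} t' * \<bar>m - f t'\<bar> powr r)" by (rule pint)
        show "integrable Om (\<lambda>t'. (indicator {a<..<b} t' * \<bar>t - f t'\<bar> powr r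
                                          + indicator {a<..<b} t' * \<bar>x i - f t'\<bar> powr r) / 2)"
          using pint by auto
        show "emeasure Om {a<..<b} \<noteq> 0" using ab a0 b1 by (subst emeasure_Om) auto
        show "{a<..<b} \<in> sets Om" using ab a0 b1 by (auto simp: sets_Om_iff)
        have strict: "\<bar>m - f t'\<bar> powr r < (\<bar>t - f t'\<bar> powr r + \<bar>x i - f t'\<bar> powr r) / 2" for t'
        proof -
          have "\<bar>((t - f t') + (x i - f t')) / 2\<bar> powr r < (\<bar>t - f t'\<bar> powr r + \<bar>x i - f t'\<bar> powr r) / 2"
            by (rule strict_mid_abs_powr[OF r1]) (use ne in auto)
          moreover have eqm: "((t - f t') + (x i - f t')) / 2 = m - f t'" unfolding m_def by (simp add: field_simps)
          ultimately show ?thesis by (simp only: eqm)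
        qed
        show "AE t' in Om. t' \<in> {a<..<b} \<longrightarrow> indicator {a<..<b} t' * \<bar>m - f t'\<bar> powr r
            \<noteq> (indicator {a<..<b} t' * \<bar>t - f t'\<bar> powr r + indicator {a<..<b} t' * \<bar>x i - f t'\<bar> powr r) / 2"
          using strict by (auto intro!: AE_I2 dest: less_imp_neq)
        show "AE t' in Om. indicator {a<..<b} t' * \<bar>m - f t'\<bar> powr r
            \<le> (indicator {a<..<b} t' * \<bar>t - f t'\<bar> powr r + indicator {a<..<b} t' * \<bar>x i - f t'\<bar> powr r) / 2"
          using strict by (auto intro!: AE_I2 less_imp_le simp: indicator_def)
      qed
      also have "\<dots> = (phi t + phi (x i)) / 2" unfolding phi_def using pint by simp
      finally show ?thesis .
    qed
    also have "\<dots> \<le> phi (x i)" using \<open>phi t \<le> phi (x i)\<close> by simp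
    finally show False using min[of m] by simp
  qed
  have "tau r a b f = x i"
    unfolding tau_def
  proof (rule the_equality)
    show "\<forall>s. Lr_norm_J r a b (\<lambda>u. f u - x i) \<le> Lr_norm_J r a b (\<lambda>u. f u - s)"
      using min pnn r1 by (auto simp: norm intro!: powr_mono2)
    show "\<And>t. \<forall>s. Lr_norm_J r a b (\<lambda>u. f u - t) \<le> Lr_norm_J r a b (\<lambda>u. f u - s) \<Longrightarrow> t = x i"
      by (rule uniq)
  qed
  then show ?thesis unfolding a_def b_def by simp
qed

end

lemma sum_pair_split:
  fixes g g' :: "nat \<Rightarrow> 'a::comm_monoid_add"
  assumes S: "finite S" "i \<in> S" "Suc i \<in> S"
    and rest: "\<And>j. j \<in> S - {i, Suc i} \<Longrightarrow> g' j = g j"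
    and pair: "g' i + g' (Suc i) = g i + g (Suc i)"
  shows "sum g' S = sum g S"
proof -
  have sub: "{i, Suc i} \<subseteq> S" using S by auto
  have "sum g' S = sum g' (S - {i, Suc i}) + sum g' {i, Suc i}"
    by (rule sum.subset_diff[OF sub S(1)])
  also have "sum g' (S - {i, Suc i}) = sum g (S - {i, Suc i})" by (rule sum.cong) (auto intro: rest)
  also have "sum g' {i, Suc i} = sum g {i, Suc i}" using pair by simp
  also have "sum g (S - {i, Suc i}) + sum g {i, Suc i} = sum g S"
    by (rule sum.subset_diff[OF sub S(1), symmetric])
  finally show ?thesis .
qed

context OPT
begin

lemma part_iii:
  assumes fin: "finite (supp M)" and card: "card (supp M) \<le> n"
  shows "discr n x p = M"
proof -
  have monof: "mono_on {0<..<1} f" by (rule q_mono_on[OF RD])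
  have imgf: "f ` {0<..<1} \<subseteq> supp M" using q_in_supp[OF RD] by auto
  have finf: "finite (f ` {0<..<1})" using imgf fin finite_subset by blast
  have cardf: "card (f ` {0<..<1}) \<le> n" using card_mono[OF fin imgf] card by simp
  have "cost G0 \<le> cost f" by (rule cost_le[OF x p opt monof finf cardf])
  also have "cost f = 0" unfolding cost_def using r by simp
  finally have c0: "cost G0 = 0" using cost_nonneg[of G0] by simp
  have "AE t in Om. \<bar>G0 t - f t\<bar> powr r = 0"
    using c0 unfolding cost_def by (subst (asm) integral_nonneg_eq_0_iff_AE[OF G0_int]) auto
  then have ae: "AE t in Om. G0 t = f t" by (rule AE_mp) (auto intro!: AE_I2)
  have "discr n x p = distr Om borel (quantile (discr n x p))"
    by (rule q_distr[OF real_distribution_discr[OF p], symmetric])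
  also have "\<dots> = distr Om borel G0"
    by (rule distr_cong) (auto simp: quantile_discr[OF x p])
  also have "\<dots> = distr Om borel f"
    by (rule distr_cong_AE) (use ae G0_meas f_meas in auto)
  also have "\<dots> = M" by (rule q_distr[OF RD])
  finally show ?thesis .
qed

lemma no_empty:
  assumes big: "\<not> (finite (supp M) \<and> card (supp M) \<le> n)" and i: "1 \<le> i" "i \<le> n"
  shows "Psum p (i - 1) < Psum p i"
proof (rule ccontr)
  interpret real_distribution M by (rule RD)
  assume "\<not> Psum p (i - 1) < Psum p i"
  moreover have "Psum p (i - 1) \<le> Psum p i" using Psum_mono[OF p, of "i - 1" i] i by simp
  ultimately have e: "Psum p (i - 1) = Psum p i" by simp
  define V0 where "V0 = x ` ({1..n} - {i})"
  have finV0: "finite V0" unfolding V0_def by simp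
  have cardV0: "card V0 \<le> n - 1"
  proof -
    have "card V0 \<le> card ({1..n} - {i})" unfolding V0_def by (rule card_image_le) simp
    also have "\<dots> = n - 1" using i by simp
    finally show ?thesis .
  qed
  have img0: "G0 t \<in> V0" if t: "t \<in> {0<..<1}" for t
  proof -
    have "Lidx p t \<noteq> i"
    proof
      assume "Lidx p t = i"
      then show False using Lidx_props[OF p, of t] t e by auto
    qed
    then show ?thesis unfolding V0_def Gs_def using Lidx_props[OF p, of t] t by auto
  qed
  define S where "S = Psum p ` {0..n}"
  have finS: "finite S" unfolding S_def by simp
  show False
  proof (cases "\<forall>t\<in>{0<..<1}. t \<notin> S \<longrightarrow> f t = G0 t")
    case True
    have "supp M \<subseteq> V0"
    proof
      fix z assume z: "z \<in> supp M"
      show "z \<in> V0"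
      proof (rule ccontr)
        assume zn: "z \<notin> V0"
        obtain d where d: "d > 0" "\<forall>v\<in>V0. v \<noteq> z \<longrightarrow> d \<le> dist z v"
          using finite_set_avoid[OF finV0, of z] by blast
        define e where "e = d / 2"
        have e: "e > 0" unfolding e_def using d by simp
        have "0 < emeasure M {z - e<..<z + e}" using z e unfolding supp_def by auto
        then have "0 < measure M {z - e<..<z + e}" by (simp add: emeasure_eq_measure)
        also have "measure M {z - e<..<z + e} \<le> measure M {z - e<..z + e}"
          by (rule finite_measure_mono) auto
        also have "\<dots> = cdf M (z + e) - cdf M (z - e)" using cdf_diff_eq[of "z - e" "z + e"] e by simp
        finally have uv: "cdf M (z - e) < cdf M (z + e)" by simp
        have "infinite ({cdf M (z - e)<..<cdf M (z + e)} - S)"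
          using uv finS by (simp add: infinite_Ioo)
        then have "{cdf M (z - e)<..<cdf M (z + e)} - S \<noteq> {}" by (metis finite.emptyI)
        then obtain t where t: "t \<in> {cdf M (z - e)<..<cdf M (z + e)}" "t \<notin> S"
          by blast
        have t01: "t \<in> {0<..<1}"
          using t cdf_nonneg[of "z - e"] cdf_bounded_prob[of "z + e"] by auto
        have "z - e \<le> f t" using q_ge[OF RD, of t "z - e"] t t01 by simp
        moreover have "f t \<le> z + e" using q_le[OF RD, of t "z + e"] t t01 by simp
        moreover have "f t \<in> V0" using True t t01 img0 by auto
        ultimately have ft: "\<bar>z - f t\<bar> \<le> e" "f t \<in> V0" by auto
        then have "f t \<noteq> z" using zn by auto
        then have "d \<le> dist z (f t)" using d(2) ft(2) by auto
        then show False using ft(1) d(1) unfolding e_def dist_real_def by linarith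
      qed
    qed
    then have "finite (supp M)" using finV0 finite_subset by blast
    moreover have "card (supp M) \<le> n"
      using card_mono[OF finV0 \<open>supp M \<subseteq> V0\<close>] cardV0 by simp
    ultimately show False using big by simp
  next
    case False
    then obtain t0 where t0: "t0 \<in> {0<..<1}" "t0 \<notin> S" "f t0 \<noteq> G0 t0" by blast
    define j where "j = Lidx p t0"
    have j: "1 \<le> j" "j \<le> n" "Psum p (j - 1) \<le> t0" "t0 < Psum p j"
      using Lidx_props[OF p, of t0] t0 unfolding j_def by auto
    have jlt: "Psum p (j - 1) < t0" using j t0 unfolding S_def by force
    have G0j: "G0 t0 = x j" unfolding Gs_def j_def ..
    have Pj1: "Psum p j \<le> 1" using Psum_le1[OF p j(2)] .
    have Pj0: "0 \<le> Psum p (j - 1)" using Psum_nonneg[OF p, of "j - 1"] j by simp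
    have constj: "G0 t = x j" if "t \<in> {0<..<1}" "Psum p (j - 1) \<le> t" "t < Psum p j" for t
      by (rule G0_const[where a=j and b=j, OF that(1) j(1) j(2) order.refl that(2,3)]) simp
    have cardW: "card (insert w V0) \<le> n" for w
    proof -
      have "card (insert w V0) \<le> Suc (card V0)" using card_insert_if[OF finV0, of w] by simp
      then show ?thesis using cardV0 n1 by simp
    qed
    have finW: "finite (insert w V0)" for w using finV0 by simp
    show False
    proof (cases "x j < f t0")
      case True
      define w where "w = f t0"
      define G' where "G' t = (if t0 < t then max (G0 t) w else G0 t)" for t
      have mono: "mono_on {0<..<1} G'"
      proof (rule mono_onI)
        fix t t' :: real assume tt: "t \<in> {0<..<1}" "t' \<in> {0<..<1}" "t \<le> t'"
        show "G' t \<le> G' t'" using mono_onD[OF G0_mono tt] tt(3) unfolding G'_def by auto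
      qed
      have img: "G' ` {0<..<1} \<subseteq> insert w V0" unfolding G'_def max_def min_def using img0 by auto
      have le: "\<bar>G' t - f t\<bar> powr r \<le> \<bar>G0 t - f t\<bar> powr r"
        and lt: "G0 t < w \<Longrightarrow> \<bar>G' t - f t\<bar> powr r < \<bar>G0 t - f t\<bar> powr r"
        if t: "t \<in> {0<..<1}" "t0 < t" for t
      proof -
        have ft: "w \<le> f t" unfolding w_def using t t0 by (intro q_mono[OF RD]) auto
        show lt: "G0 t < w \<Longrightarrow> \<bar>G' t - f t\<bar> powr r < \<bar>G0 t - f t\<bar> powr r"
        proof -
          assume "G0 t < w"
          then have "\<bar>G' t - f t\<bar> < \<bar>G0 t - f t\<bar>" using ft t unfolding G'_def by auto
          then show ?thesis using r by (intro powr_less_mono2) auto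
        qed
        show "\<bar>G' t - f t\<bar> powr r \<le> \<bar>G0 t - f t\<bar> powr r"
        proof (cases "G0 t < w")
          case True then show ?thesis using lt by simp
        next
          case False then show ?thesis unfolding G'_def by simp
        qed
      qed
      show False
      proof (rule strict_contra[OF mono img finW cardW])
        fix t :: real assume t: "t \<in> {0<..<1}"
        show "\<bar>G' t - f t\<bar> powr r \<le> \<bar>G0 t - f t\<bar> powr r"
        proof (cases "t0 < t")
          case True then show ?thesis using le[OF t] by simp
        next
          case False then show ?thesis unfolding G'_def by simp
        qed
      next
        show "t0 < Psum p j" "0 \<le> t0" "Psum p j \<le> 1" using j t0 Pj1 by auto
        fix t assume t: "t \<in> {t0<..<Psum p j}"
        then have tin: "t \<in> {0<..<1}" using t0 Pj1 by auto
        have "G0 t = x j" using constj[OF tin] t jlt by auto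
        then show "\<bar>G' t - f t\<bar> powr r < \<bar>G0 t - f t\<bar> powr r"
          using lt[OF tin] t True unfolding w_def by auto
      qed
    next
      case False
      then have lt0: "f t0 < x j" using t0 G0j by auto
      define w where "w = f t0"
      define G' where "G' t = (if t < t0 then min (G0 t) w else G0 t)" for t
      have mono: "mono_on {0<..<1} G'"
      proof (rule mono_onI)
        fix t t' :: real assume tt: "t \<in> {0<..<1}" "t' \<in> {0<..<1}" "t \<le> t'"
        show "G' t \<le> G' t'" using mono_onD[OF G0_mono tt] tt(3) unfolding G'_def by auto
      qed
      have img: "G' ` {0<..<1} \<subseteq> insert w V0" unfolding G'_def max_def min_def using img0 by auto
      have le: "\<bar>G' t - f t\<bar> powr r \<le> \<bar>G0 t - f t\<bar> powr r"
        and lt: "w < G0 t \<Longrightarrow> \<bar>G' t - f t\<bar> powr r < \<bar>G0 t - f t\<bar> powr r"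
        if t: "t \<in> {0<..<1}" "t < t0" for t
      proof -
        have ft: "f t \<le> w" unfolding w_def using t t0 by (intro q_mono[OF RD]) auto
        show lt: "w < G0 t \<Longrightarrow> \<bar>G' t - f t\<bar> powr r < \<bar>G0 t - f t\<bar> powr r"
        proof -
          assume "w < G0 t"
          then have "\<bar>G' t - f t\<bar> < \<bar>G0 t - f t\<bar>" using ft t unfolding G'_def by auto
          then show ?thesis using r by (intro powr_less_mono2) auto
        qed
        show "\<bar>G' t - f t\<bar> powr r \<le> \<bar>G0 t - f t\<bar> powr r"
        proof (cases "w < G0 t")
          case True then show ?thesis using lt by simp
        next
          case False then show ?thesis unfolding G'_def using t by simp
        qed
      qed
      show False
      proof (rule strict_contra[OF mono img finW cardW])
        fix t :: real assume t: "t \<in> {0<..<1}"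
        show "\<bar>G' t - f t\<bar> powr r \<le> \<bar>G0 t - f t\<bar> powr r"
        proof (cases "t < t0")
          case True then show ?thesis using le[OF t] by simp
        next
          case False then show ?thesis unfolding G'_def by simp
        qed
      next
        show "Psum p (j - 1) < t0" "0 \<le> Psum p (j - 1)" "t0 \<le> 1" using jlt Pj0 t0 by auto
        fix t assume t: "t \<in> {Psum p (j - 1)<..<t0}"
        then have tin: "t \<in> {0<..<1}" using t0 Pj0 by auto
        have "G0 t = x j" using constj[OF tin] t j by auto
        then show "\<bar>G' t - f t\<bar> powr r < \<bar>G0 t - f t\<bar> powr r"
          using lt[OF tin] t lt0 unfolding w_def by auto
      qed
    qed
  qed
qed

end

context OPT
begin

lemma x_strict:
  assumes big: "\<not> (finite (supp M) \<and> card (supp M) \<le> n)" and i: "1 \<le> i" "i \<le> n - 1"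
  shows "x i < x (Suc i)"
proof (rule ccontr)
  assume "\<not> x i < x (Suc i)"
  moreover have "x i \<le> x (Suc i)" using x i n1 unfolding Xi_def by simp
  ultimately have xe: "x (Suc i) = x i" by simp
  have in1: "Suc i \<le> n" using i n1 by simp
  define q' where "q' j = (if j = i then p i + p (Suc i) else if j = Suc i then 0 else p j)" for j
  have pnn: "\<And>j. j \<in> {1..n} \<Longrightarrow> 0 \<le> p j" using p unfolding Pi_n_def by auto
  have S: "finite {1..n}" "i \<in> {1..n}" "Suc i \<in> {1..n}" using i in1 by auto
  have Pq: "Pi_n n q'"
    unfolding Pi_n_def
  proof
    show "\<forall>j\<in>{1..n}. 0 \<le> q' j" using pnn S unfolding q'_def by (auto intro: add_nonneg_nonneg)
    have "(\<Sum>j=1..n. q' j) = (\<Sum>j=1..n. p j)"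
      by (rule sum_pair_split[OF S]) (auto simp: q'_def)
    then show "(\<Sum>j=1..n. q' j) = 1" using p unfolding Pi_n_def by simp
  qed
  have deq: "discr n x q' = discr n x p"
    unfolding discr_def
  proof (intro arg_cong[where f="measure_of UNIV (sets borel)"] ext)
    fix A
    show "(\<Sum>j=1..n. ennreal (q' j) * indicator A (x j)) = (\<Sum>j=1..n. ennreal (p j) * indicator A (x j))"
    proof (rule sum_pair_split[OF S])
      show "\<And>j. j \<in> {1..n} - {i, Suc i} \<Longrightarrow> ennreal (q' j) * indicator A (x j) = ennreal (p j) * indicator A (x j)"
        unfolding q'_def by auto
      have "ennreal (p i + p (Suc i)) = ennreal (p i) + ennreal (p (Suc i))"
        using pnn S by (intro ennreal_plus) auto
      then show "ennreal (q' i) * indicator A (x i) + ennreal (q' (Suc i)) * indicator A (x (Suc i))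
          = ennreal (p i) * indicator A (x i) + ennreal (p (Suc i)) * indicator A (x (Suc i))"
        unfolding q'_def xe by (simp add: distrib_right)
    qed
  qed
  have O2: "OPT r M n x q'"
    unfolding OPT_def OPT_axioms_def QS_def using r M x Pq opt deq by auto
  have "Psum q' (Suc i - 1) < Psum q' (Suc i)"
    by (rule OPT.no_empty[OF O2 big]) (use in1 in auto)
  then show False by (simp add: Psum_Suc q'_def)
qed

end

theorem theorem5p11:
  fixes r :: real and M :: "real measure" and n :: nat and x p :: "nat \<Rightarrow> real"
  assumes r: "r \<ge> 1"
    and M: "in_Pr r M"
    and x: "Xi n x" and p: "Pi_n n p"
    and opt: "\<And>y q. Xi n y \<Longrightarrow> Pi_n n q \<Longrightarrow> d_r r (discr n x p) M \<le> d_r r (discr n y q) M"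
  shows
    "(\<forall>i. 1 \<le> i \<and> i \<le> n - 1 \<and> x i < x (Suc i) \<longrightarrow>
        measure M {..< (x i + x (Suc i)) / 2} \<le> Psum p i \<and>
        Psum p i \<le> measure M {.. (x i + x (Suc i)) / 2})
   \<and> (\<forall>i. 1 \<le> i \<and> i \<le> n \<and> Psum p (i - 1) < Psum p i \<longrightarrow>
        (r = 1 \<longrightarrow> x i \<in> Qset M ((Psum p (i - 1) + Psum p i) / 2)) \<and>
        (r > 1 \<longrightarrow> x i = tau r (Psum p (i - 1)) (Psum p i) (quantile M)))
   \<and> (finite (supp M) \<and> card (supp M) \<le> n \<longrightarrow> discr n x p = M)
   \<and> (\<not> (finite (supp M) \<and> card (supp M) \<le> n) \<longrightarrow>
        (\<forall>i. 1 \<le> i \<and> i \<le> n - 1 \<longrightarrow> x i < x (Suc i)) \<and>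
        (\<forall>i. 1 \<le> i \<and> i \<le> n \<longrightarrow> Psum p (i - 1) < Psum p i))"
proof -
  interpret OPT r M n x p
    unfolding OPT_def OPT_axioms_def QS_def using r M x p opt by auto
  show ?thesis
    using part_i_lower part_i_upper part_ii_1 part_ii_gt part_iii x_strict no_empty
    by blast
qed

end
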